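(* Let $\rho=|\psi\rangle\langle\psi|$ be an $n$-qubit pure state, $S\subseteq[n]$ non-empty with $s=|S|$, $\epsilon>0$ and $1-\delta\in(0,1)$. Let $N_B=\lceil 8\log(1/\delta)\rceil$, $B=\lceil 4(3/2)^s\epsilon^{-2}\rceil$ and $L=N_BB$. Sample independent random local unitaries $U_1,\dots,U_L$, each $U_l=\bigotimes_{i\in S}U_{l,i}$ with independent Haar-random $U_{l,i}\in U(2)$, and for each $l$ obtain two outcomes $\mathbf{Z}_{l,1},\mathbf{Z}_{l,2}\in\{0,1\}^s$ which, conditioned on $U_l$, are independent with distribution $P_{U_l}(\mathbf{z})=\operatorname{tr}\big(U_l\rho U_l^\dagger(|\mathbf{z}\rangle\langle\mathbf{z}|\otimes\mathbb{I}_{[n]\setminus S})\big)$. For each $1\le b\le N_B$ define $$\overline{\mathcal{C}}^{(b)}_{|\psi\rangle}(S)=1-\Big(\tfrac32\Big)^s\frac1B\sum_{l=(b-1)B+1}^{bB}\mathbb{1}[\mathbf{Z}_{l,1}=\mathbf{Z}_{l,2}].$$ Then $$\Pr\Big[\big|\operatorname{median}\big(\overline{\mathcal{C}}^{(1)}_{|\psi\rangle}(S),\dots,\overline{\mathcal{C}}^{(N_B)}_{|\psi\rangle}(S)\big)-\mathcal{C}_{|\psi\rangle}(S)\big|\ge\epsilon\Big]\le\delta,$$ so that $O\big((3/2)^s\log(1/\delta)\epsilon^{-2}\big)$ measurement outcomes suffice.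
   Context: $[n]=\{1,\dots,n\}$ labels the qubits. For an $n$-qubit pure state $|\psi\rangle$ and a non-empty $S\subseteq[n]$ with $s=|S|$, the concentratable entanglement is $\mathcal{C}_{|\psi\rangle}(S)=1-\frac{1}{2^s}\sum_{\alpha\subseteq S}\operatorname{tr}(\rho_\alpha^2)$, where $\rho_\alpha$ is the reduced state of $|\psi\rangle\langle\psi|$ on the qubits in $\alpha$, and $\operatorname{tr}(\rho_\emptyset^2):=1$. $\mathbb{1}[A]$ is $1$ if $A$ holds and $0$ otherwise. *)

theory Defs
  imports "HOL-Probability.Probability"
begin

text \<open>Computational basis states of the n qubits [n] = {1..n} are encoded as subsets
  x of {1..n} (qubit i is in state 1 iff i is in x).  A pure state is a vector
  psi :: nat set => complex, only its values on Pow {1..n} matter.\<close>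

definition qubits :: "nat \<Rightarrow> nat set" where
  "qubits n = {1..n}"

definition is_pure_state :: "nat \<Rightarrow> (nat set \<Rightarrow> complex) \<Rightarrow> bool" where
  "is_pure_state n psi \<longleftrightarrow> (\<Sum>x\<in>Pow (qubits n). (cmod (psi x))\<^sup>2) = 1"

text \<open>Reduced density matrix of |psi><psi| on the qubits in alpha (partial trace over
  [n] - alpha), entries indexed by basis states a, b of the qubits in alpha.\<close>
definition reduced_state :: "nat \<Rightarrow> (nat set \<Rightarrow> complex) \<Rightarrow> nat set \<Rightarrow> nat set \<Rightarrow> nat set \<Rightarrow> complex" where
  "reduced_state n psi alpha a b =
     (\<Sum>c\<in>Pow (qubits n - alpha). psi (a \<union> c) * cnj (psi (b \<union> c)))"

definition purity :: "nat \<Rightarrow> (nat set \<Rightarrow> complex) \<Rightarrow> nat set \<Rightarrow> real" where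
  "purity n psi alpha =
     (if alpha = {} then 1 else
      Re (\<Sum>a\<in>Pow alpha. \<Sum>b\<in>Pow alpha.
            reduced_state n psi alpha a b * reduced_state n psi alpha b a))"

definition conc_ent :: "nat \<Rightarrow> (nat set \<Rightarrow> complex) \<Rightarrow> nat set \<Rightarrow> real" where
  "conc_ent n psi S = 1 - (1 / 2 ^ card S) * (\<Sum>alpha\<in>Pow S. purity n psi alpha)"

text \<open>2x2 complex matrices, rows/columns indexed by the bit values False (= 0), True (= 1).\<close>
type_synonym mat2 = "complex ^ bool ^ bool"

definition adjoint2 :: "mat2 \<Rightarrow> mat2" where
  "adjoint2 A = (\<chi> i j. cnj (A $ j $ i))"

definition U2 :: "mat2 set" where
  "U2 = {A. A ** adjoint2 A = mat 1 \<and> adjoint2 A ** A = mat 1}"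

definition haar_U2 :: "mat2 measure \<Rightarrow> bool" where
  "haar_U2 H \<longleftrightarrow> prob_space H \<and> sets H = sets borel \<and> emeasure H U2 = 1 \<and>
     (\<forall>V\<in>U2. distr H borel (\<lambda>A. V ** A) = H \<and> distr H borel (\<lambda>A. A ** V) = H)"

text \<open>The state (U (x) I) |psi>, where U = tensor product over i in S of the single-qubit
  unitaries u i acting on qubit i, and identity on [n] - S.\<close>
definition apply_local :: "nat \<Rightarrow> nat set \<Rightarrow> (nat \<Rightarrow> mat2) \<Rightarrow> (nat set \<Rightarrow> complex) \<Rightarrow> nat set \<Rightarrow> complex" where
  "apply_local n S u psi x =
     (\<Sum>w\<in>Pow S. (\<Prod>i\<in>S. u i $ (i \<in> x) $ (i \<in> w)) * psi (w \<union> (x - S)))"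

text \<open>P_U(z) = tr(U rho U^dagger (|z><z| (x) I_{[n]-S})) = <U psi| (|z><z| (x) I) |U psi>,
  for an outcome z in {0,1}^S encoded as the subset z of S of qubits measured as 1.\<close>
definition outcome_prob :: "nat \<Rightarrow> nat set \<Rightarrow> (nat \<Rightarrow> mat2) \<Rightarrow> (nat set \<Rightarrow> complex) \<Rightarrow> nat set \<Rightarrow> real" where
  "outcome_prob n S u psi z =
     (\<Sum>x\<in>{x\<in>Pow (qubits n). x \<inter> S = z}. (cmod (apply_local n S u psi x))\<^sup>2)"

definition median :: "real list \<Rightarrow> real" where
  "median xs = (let ys = sort xs; m = length xs in
     if odd m then ys ! (m div 2) else (ys ! (m div 2 - 1) + ys ! (m div 2)) / 2)"

text \<open>Block estimator C-bar^(b): Z l j is the outcome Z_{l,j} (a subset of S).\<close>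
definition block_estimate :: "nat \<Rightarrow> nat \<Rightarrow> (nat \<Rightarrow> nat \<Rightarrow> nat set) \<Rightarrow> nat \<Rightarrow> real" where
  "block_estimate s B Z b =
     1 - (3/2) ^ s * (1 / real B) *
       (\<Sum>l\<in>{(b-1)*B+1..b*B}. if Z l 1 = Z l 2 then 1 else 0)"

text \<open>The local unitaries
  U (l,i), l in {1..L}, i in S, are i.i.d. Haar on U(2) (product measure); conditioned on
  them, the outcomes Z l 1, Z l 2 (l = 1..L) are independent with laws P_{U_l}.  The
  probability of the event is obtained by integrating the conditional probability.\<close>
definition failure_prob ::
  "mat2 measure \<Rightarrow> nat \<Rightarrow> (nat set \<Rightarrow> complex) \<Rightarrow> nat set \<Rightarrow> real \<Rightarrow> nat \<Rightarrow> nat \<Rightarrow> ennreal" where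
  "failure_prob H n psi S eps NB B =
     (let L = NB * B in
      \<integral>\<^sup>+ U. ennreal
        (\<Sum>Z\<in>(\<Pi>\<^sub>E l\<in>{1..L}. \<Pi>\<^sub>E j\<in>{1::nat,2}. Pow S).
           (\<Prod>l\<in>{1..L}. outcome_prob n S (\<lambda>i. U (l, i)) psi (Z l 1) *
                          outcome_prob n S (\<lambda>i. U (l, i)) psi (Z l 2)) *
           (if \<bar>median (map (block_estimate (card S) B Z) [1..<NB+1]) - conc_ent n psi S\<bar> \<ge> eps
            then 1 else 0))
      \<partial>(\<Pi>\<^sub>M p\<in>{1..L} \<times> S. H))"

end

theory Submission
  imports Defs
begin

lemma mat2_mult_entry: "(A ** B) $ i $ j = A $ i $ False * B $ False $ j + A $ i $ True * B $ True $ j"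
  for A B :: mat2
  by (simp add: matrix_matrix_mult_def UNIV_bool)

lemma U2_colsum:
  assumes "A \<in> U2"
  shows "A $ False $ a * cnj (A $ False $ b) + A $ True $ a * cnj (A $ True $ b) = (if a = b then 1 else 0)"
proof -
  have "adjoint2 A ** A = mat 1" using assms by (simp add: U2_def)
  then have "(adjoint2 A ** A) $ b $ a = mat 1 $ b $ a" by simp
  then show ?thesis by (auto simp: mat2_mult_entry adjoint2_def mat_def mult.commute)
qed

lemma U2_rowsum:
  assumes "A \<in> U2"
  shows "A $ t $ False * cnj (A $ t $ False) + A $ t $ True * cnj (A $ t $ True) = 1"
proof -
  have "A ** adjoint2 A = mat 1" using assms by (simp add: U2_def)
  then have "(A ** adjoint2 A) $ t $ t = mat 1 $ t $ t" by simp
  then show ?thesis by (auto simp: mat2_mult_entry adjoint2_def mat_def)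
qed

lemma U2_entry_le1:
  assumes "A \<in> U2" shows "cmod (A $ i $ j) \<le> 1"
proof -
  have "A $ False $ j * cnj (A $ False $ j) + A $ True $ j * cnj (A $ True $ j) = 1"
    using U2_colsum[OF assms, of j j] by simp
  then have "complex_of_real ((cmod (A $ False $ j))\<^sup>2 + (cmod (A $ True $ j))\<^sup>2) = 1"
    by (simp only: of_real_add complex_norm_square)
  then have e: "(cmod (A $ False $ j))\<^sup>2 + (cmod (A $ True $ j))\<^sup>2 = 1"
    using of_real_eq_1_iff by blast
  have "(cmod (A $ i $ j))\<^sup>2 \<le> 1"
  proof -
    have "(cmod (A $ i $ j))\<^sup>2 \<le> (cmod (A $ False $ j))\<^sup>2 + (cmod (A $ True $ j))\<^sup>2"
      by (cases i) simp_all
    then show ?thesis using e by simp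
  qed
  then show ?thesis by (simp add: power_le_one_iff abs_le_square_iff)
qed

definition gfun :: "mat2 \<Rightarrow> bool \<Rightarrow> bool \<Rightarrow> bool \<Rightarrow> bool \<Rightarrow> complex" where
  "gfun A a b c d = (\<Sum>t\<in>UNIV. A $ t $ a * cnj (A $ t $ b) * A $ t $ c * cnj (A $ t $ d))"

lemma gfun_expand: "gfun A a b c d =
   A $ False $ a * cnj (A $ False $ b) * A $ False $ c * cnj (A $ False $ d) +
   A $ True $ a * cnj (A $ True $ b) * A $ True $ c * cnj (A $ True $ d)"
  by (simp add: gfun_def UNIV_bool)

lemma cont_entry[continuous_intros]: "continuous_on X (\<lambda>A::mat2. A $ i $ j)"
  by (intro continuous_intros)

lemma gfun_cont: "continuous_on UNIV (\<lambda>A. gfun A a b c d)"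
  unfolding gfun_expand by (intro continuous_intros)

lemma gfun_bound: "A \<in> U2 \<Longrightarrow> cmod (gfun A a b c d) \<le> 2"
proof -
  assume A: "A \<in> U2"
  have b: "cmod (A $ t $ a * cnj (A $ t $ b) * A $ t $ c * cnj (A $ t $ d)) \<le> 1" for t
    using U2_entry_le1[OF A] by (simp add: norm_mult mult_le_one)
  show ?thesis unfolding gfun_expand
    by (rule order_trans[OF norm_triangle_ineq]) (use b[of False] b[of True] in simp)
qed

lemma mult_right_cont: "continuous_on UNIV (\<lambda>A::mat2. A ** V)"
  unfolding matrix_matrix_mult_def by (intro continuous_intros)

definition dd :: "bool \<Rightarrow> complex" where "dd x = (if x then \<i> else 1)"
definition Dm :: mat2 where "Dm = (\<chi> i j. if i = j then dd i else 0)"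
definition Pm :: mat2 where "Pm = (\<chi> i j. if i = j then 0 else 1)"
definition wv :: "bool \<Rightarrow> complex" where "wv x = (if x then -4/5 else 3/5)"
definition Wm :: mat2 where "Wm = (\<chi> i j. if i then (if j then 3/5 else -4/5) else (if j then 4/5 else 3/5))"
definition "hE H a b c d = integral\<^sup>L H (\<lambda>A. gfun A a b c d)"

context
  fixes H :: "mat2 measure"
  assumes haar: "haar_U2 H"
begin

lemma H_prob: "prob_space H" using haar by (simp add: haar_U2_def)

lemma H_sets: "sets H = sets borel" using haar by (simp add: haar_U2_def)

lemma H_AE_U2: "AE A in H. A \<in> U2"
proof -
  interpret prob_space H by (rule H_prob)
  have "emeasure H U2 = 1" using haar by (simp add: haar_U2_def)
  then have U: "U2 \<in> sets H" using emeasure_notin_sets by fastforce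
  then show ?thesis using \<open>emeasure H U2 = 1\<close>
    by (simp add: prob_space_def AE_in_set_eq_1 emeasure_eq_measure)
qed

lemma H_meas: "f \<in> borel_measurable borel \<Longrightarrow> f \<in> borel_measurable H"
  using measurable_cong_sets[OF H_sets refl] by blast

lemma H_integrable:
  fixes f :: "mat2 \<Rightarrow> complex"
  assumes "continuous_on UNIV f" "\<And>A. A \<in> U2 \<Longrightarrow> cmod (f A) \<le> B"
  shows "integrable H f"
proof -
  interpret prob_space H by (rule H_prob)
  show ?thesis
    by (rule integrable_const_bound[where B=B])
       (use H_AE_U2 assms in \<open>auto elim!: eventually_mono intro!: H_meas borel_measurable_continuous_onI\<close>)
qed

lemma gfun_integrable: "integrable H (\<lambda>A. gfun A a b c d)"
  by (rule H_integrable[OF gfun_cont gfun_bound])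

lemma haar_invariant:
  fixes f :: "mat2 \<Rightarrow> complex"
  assumes V: "V \<in> U2" and f: "continuous_on UNIV f"
  shows "(\<integral>A. f (A ** V) \<partial>H) = (\<integral>A. f A \<partial>H)"
proof -
  have d: "distr H borel (\<lambda>A. A ** V) = H" using haar V by (simp add: haar_U2_def)
  have "(\<lambda>A. A ** V) \<in> H \<rightarrow>\<^sub>M borel"
    by (rule H_meas) (rule borel_measurable_continuous_onI[OF mult_right_cont])
  then have "integral\<^sup>L (distr H borel (\<lambda>A. A ** V)) f = (\<integral>A. f (A ** V) \<partial>H)"
    by (rule integral_distr) (rule borel_measurable_continuous_onI[OF f])
  then show ?thesis using d by simp
qed



lemma Dm_U2: "Dm \<in> U2"
  by (simp add: U2_def vec_eq_iff mat2_mult_entry adjoint2_def mat_def Dm_def dd_def all_bool_eq)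

lemma Pm_U2: "Pm \<in> U2"
  by (simp add: U2_def vec_eq_iff mat2_mult_entry adjoint2_def mat_def Pm_def all_bool_eq)

lemma Wm_U2: "Wm \<in> U2"
  by (simp add: U2_def vec_eq_iff mat2_mult_entry adjoint2_def mat_def Wm_def all_bool_eq)

lemma Dm_entry: "(A ** Dm) $ t $ a = A $ t $ a * dd a"
  for A :: mat2
  unfolding mat2_mult_entry by (cases a) (simp_all add: Dm_def)

lemma Pm_entry: "(A ** Pm) $ t $ a = A $ t $ (\<not> a)"
  for A :: mat2
  unfolding mat2_mult_entry by (cases a) (simp_all add: Pm_def)

lemma Wm_entry: "(A ** Wm) $ t $ False = (\<Sum>a\<in>UNIV. A $ t $ a * wv a)"
  for A :: mat2
  unfolding mat2_mult_entry by (simp add: Wm_def wv_def UNIV_bool)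

lemma gfun_Dm: "gfun (A ** Dm) a b c d = (dd a * cnj (dd b) * dd c * cnj (dd d)) * gfun A a b c d"
  unfolding gfun_def Dm_entry sum_distrib_left by (rule sum.cong) (simp_all add: mult_ac)

lemma gfun_Pm: "gfun (A ** Pm) a b c d = gfun A (\<not>a) (\<not>b) (\<not>c) (\<not>d)"
  unfolding gfun_def Pm_entry ..

lemma gfun_comm1: "gfun A a b c d = gfun A c b a d"
  unfolding gfun_def by (simp add: mult_ac)

lemma gfun_comm2: "gfun A a b c d = gfun A a d c b"
  unfolding gfun_def by (simp add: mult_ac)

lemma wv_real: "cnj (wv a) = wv a"
  by (simp add: wv_def)

lemma four_prod: "(\<Sum>a\<in>I. f a) * (\<Sum>b\<in>I. g b) * (\<Sum>c\<in>I. h c) * (\<Sum>d\<in>I. k d) =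
  (\<Sum>d\<in>I. \<Sum>c\<in>I. \<Sum>b\<in>I. \<Sum>a\<in>I. f a * g b * h c * k d)" for f g h k :: "'a \<Rightarrow> complex"
  by (simp only: sum_distrib_left sum_distrib_right)

lemma swap5: "(\<Sum>t\<in>T. \<Sum>d\<in>D. \<Sum>c\<in>C. \<Sum>b\<in>B. \<Sum>a\<in>A. F t d c b a) =
   (\<Sum>d\<in>D. \<Sum>c\<in>C. \<Sum>b\<in>B. \<Sum>a\<in>A. \<Sum>t\<in>T. (F t d c b a :: complex))"
  for T :: "'t set" and D :: "'d set" and C :: "'c set" and B :: "'b set" and A :: "'a set"
  by (simp add: sum.swap[where A=T])

lemma gfun_Wm: "gfun (A ** Wm) False False False False =
   (\<Sum>d\<in>UNIV. \<Sum>c\<in>UNIV. \<Sum>b\<in>UNIV. \<Sum>a\<in>UNIV. (wv a * wv b * wv c * wv d) * gfun A a b c d)"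
proof -
  have "gfun (A ** Wm) False False False False =
     (\<Sum>t\<in>UNIV. (\<Sum>a\<in>UNIV. A $ t $ a * wv a) * (\<Sum>b\<in>UNIV. cnj (A $ t $ b) * wv b) *
        (\<Sum>c\<in>UNIV. A $ t $ c * wv c) * (\<Sum>d\<in>UNIV. cnj (A $ t $ d) * wv d))"
    unfolding gfun_def Wm_entry by (simp add: wv_real)
  also have "\<dots> = (\<Sum>t\<in>UNIV. \<Sum>d\<in>UNIV. \<Sum>c\<in>UNIV. \<Sum>b\<in>UNIV. \<Sum>a\<in>UNIV.
      (A $ t $ a * wv a) * (cnj (A $ t $ b) * wv b) * (A $ t $ c * wv c) * (cnj (A $ t $ d) * wv d))"
    by (simp only: four_prod)
  also have "\<dots> = (\<Sum>d\<in>UNIV. \<Sum>c\<in>UNIV. \<Sum>b\<in>UNIV. \<Sum>a\<in>UNIV. \<Sum>t\<in>UNIV.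
      (A $ t $ a * wv a) * (cnj (A $ t $ b) * wv b) * (A $ t $ c * wv c) * (cnj (A $ t $ d) * wv d))"
    by (rule swap5)
  also have "\<dots> = (\<Sum>d\<in>UNIV. \<Sum>c\<in>UNIV. \<Sum>b\<in>UNIV. \<Sum>a\<in>UNIV. (wv a * wv b * wv c * wv d) *
      (\<Sum>t\<in>UNIV. A $ t $ a * cnj (A $ t $ b) * A $ t $ c * cnj (A $ t $ d)))"
    by (simp add: sum_distrib_left mult_ac)
  finally show ?thesis unfolding gfun_def .
qed

lemma gfun_U2_sum: "A \<in> U2 \<Longrightarrow> gfun A False False False False + gfun A False False True True = 1"
proof -
  assume A: "A \<in> U2"
  have "gfun A False False False False + gfun A False False True True =
     (\<Sum>t\<in>UNIV. A $ t $ False * cnj (A $ t $ False) *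
        (A $ t $ False * cnj (A $ t $ False) + A $ t $ True * cnj (A $ t $ True)))"
    unfolding gfun_def by (simp add: sum.distrib[symmetric] algebra_simps)
  also have "\<dots> = (\<Sum>t\<in>UNIV. A $ t $ False * cnj (A $ t $ False))"
    using U2_rowsum[OF A] by simp
  also have "\<dots> = 1" using U2_colsum[OF A, of False False] by (simp add: UNIV_bool)
  finally show ?thesis .
qed


lemma hE_zero: "dd a * cnj (dd b) * dd c * cnj (dd d) \<noteq> 1 \<Longrightarrow> hE H a b c d = 0"
proof -
  assume ne: "dd a * cnj (dd b) * dd c * cnj (dd d) \<noteq> 1"
  have "hE H a b c d = integral\<^sup>L H (\<lambda>A. gfun (A ** Dm) a b c d)"
    unfolding hE_def by (rule haar_invariant[OF Dm_U2 gfun_cont, symmetric])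
  also have "\<dots> = (dd a * cnj (dd b) * dd c * cnj (dd d)) * hE H a b c d"
    unfolding gfun_Dm hE_def by (rule integral_mult_right_zero)
  finally show ?thesis using ne
    by (metis mult_cancel_right2)
qed

lemma hE_swap: "hE H a b c d = hE H (\<not>a) (\<not>b) (\<not>c) (\<not>d)"
proof -
  have "hE H a b c d = integral\<^sup>L H (\<lambda>A. gfun (A ** Pm) a b c d)"
    unfolding hE_def by (rule haar_invariant[OF Pm_U2 gfun_cont, symmetric])
  then show ?thesis unfolding gfun_Pm hE_def .
qed

lemma hE_comm1: "hE H a b c d = hE H c b a d"
  unfolding hE_def by (subst gfun_comm1) (rule refl)

lemma hE_comm2: "hE H a b c d = hE H a d c b"
  unfolding hE_def by (subst gfun_comm2) (rule refl)

lemma hE_W: "hE H False False False False = (\<Sum>d\<in>UNIV. \<Sum>c\<in>UNIV. \<Sum>b\<in>UNIV. \<Sum>a\<in>UNIV. (wv a * wv b * wv c * wv d) * hE H a b c d)"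
proof -
  have "hE H False False False False = integral\<^sup>L H (\<lambda>A. gfun (A ** Wm) False False False False)"
    unfolding hE_def by (rule haar_invariant[OF Wm_U2 gfun_cont, symmetric])
  also have "\<dots> = (\<Sum>d\<in>UNIV. \<Sum>c\<in>UNIV. \<Sum>b\<in>UNIV. \<Sum>a\<in>UNIV. (wv a * wv b * wv c * wv d) * hE H a b c d)"
  proof -
    have int: "\<And>k a b c d. integrable H (\<lambda>A. k * gfun A a b c d)"
      by (intro integrable_mult_right gfun_integrable)
    show ?thesis unfolding gfun_Wm hE_def by (simp add: int integral_mult_right_zero)
  qed
  finally show ?thesis .
qed

lemma hE_sum1: "hE H False False False False + hE H False False True True = 1"
proof -
  interpret prob_space H by (rule H_prob)
  have "hE H False False False False + hE H False False True True =
     integral\<^sup>L H (\<lambda>A. gfun A False False False False + gfun A False False True True)"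
    unfolding hE_def by (rule Bochner_Integration.integral_add[symmetric]) (rule gfun_integrable)+
  also have "\<dots> = integral\<^sup>L H (\<lambda>A. 1)"
    by (rule integral_cong_AE) (use H_AE_U2 gfun_U2_sum in \<open>auto elim!: eventually_mono intro!: H_meas borel_measurable_continuous_onI continuous_intros gfun_cont\<close>)
  also have "\<dots> = 1" by (simp add: prob_space)
  finally show ?thesis .
qed

lemma haar_gfun: "hE H a b c d = (if a = b \<and> c = d then 1/3 else 0) + (if a = d \<and> c = b then 1/3 else 0)"
proof -
  have z: "hE H a b c d = 0" if "dd a * cnj (dd b) * dd c * cnj (dd d) \<noteq> 1" for a b c d
    using hE_zero that by blast
  have ne: "\<i> \<noteq> (1::complex)" "- \<i> \<noteq> (1::complex)" "-1 \<noteq> (1::complex)"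
    by (simp_all add: complex_eq_iff)
  have s1: "hE H True True True True = hE H False False False False"
    using hE_swap[of True True True True] by simp
  have s2: "hE H True True False False = hE H False False True True"
    using hE_swap[of True True False False] by simp
  have s3: "hE H False True True False = hE H False False True True"
    using hE_comm2[of False True True False] by simp
  have s4: "hE H True False False True = hE H False False True True"
    using hE_comm1[of True False False True] by simp
  have W: "hE H False False False False = (337/625) * hE H False False False False + (576/625) * hE H False False True True"
    using hE_W by (simp add: UNIV_bool wv_def z dd_def s1 s2 s3 s4 ne) (simp add: algebra_simps)
  then have e: "hE H False False False False = 1 - hE H False False True True"
    using hE_sum1 by (simp add: algebra_simps)
  have W2: "1 - hE H False False True True = (337/625) * (1 - hE H False False True True) + (576/625) * hE H False False True True"
    by (rule W[unfolded e])
  have "hE H False False True True = 1/3"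
  proof -
    define y where "y = hE H False False True True"
    have "1 - y = (337/625) * (1 - y) + (576/625) * y" using W2 unfolding y_def .
    then have "288 = 864 * y" by (simp add: field_simps)
    then show ?thesis unfolding y_def[symmetric] by (simp add: field_simps)
  qed
  then have v: "hE H False False True True = 1/3" "hE H False False False False = 2/3"
    using e by simp_all
  show ?thesis
    by (cases a; cases b; cases c; cases d) (simp_all add: z dd_def v s1 s2 s3 s4 ne)
qed

end


lemma pow_split:
  assumes "A \<inter> B = {}"
  shows "(\<Sum>x\<in>Pow (A \<union> B). f x) = (\<Sum>a\<in>Pow A. \<Sum>b\<in>Pow B. f (a \<union> b))"
proof -
  have "(\<Sum>x\<in>Pow (A \<union> B). f x) = (\<Sum>p\<in>Pow A \<times> Pow B. f (fst p \<union> snd p))"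
    by (rule sum.reindex_bij_witness[of _ "\<lambda>p. fst p \<union> snd p" "\<lambda>x. (x \<inter> A, x \<inter> B)"])
       (use assms in \<open>auto intro!: arg_cong[where f=f]\<close>)
  also have "\<dots> = (\<Sum>a\<in>Pow A. \<Sum>b\<in>Pow B. f (a \<union> b))"
    by (simp add: sum.cartesian_product case_prod_beta)
  finally show ?thesis .
qed

lemma sum_pow_prod:
  fixes h :: "'a \<Rightarrow> bool \<Rightarrow> 'b::comm_semiring_1"
  assumes "finite S"
  shows "(\<Sum>z\<in>Pow S. \<Prod>i\<in>S. h i (i \<in> z)) = (\<Prod>i\<in>S. \<Sum>t\<in>UNIV. h i t)"
  using assms
proof (induction S rule: finite_induct)
  case empty
  then show ?case by simp
next
  case (insert x S)
  have d: "Pow S \<inter> insert x ` Pow S = {}" using insert by auto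
  have inj: "inj_on (insert x) (Pow S)" using insert by (auto simp: inj_on_def)
  have "(\<Sum>z\<in>Pow (insert x S). \<Prod>i\<in>insert x S. h i (i \<in> z)) =
        (\<Sum>z\<in>Pow S. \<Prod>i\<in>insert x S. h i (i \<in> z)) + (\<Sum>z\<in>insert x ` Pow S. \<Prod>i\<in>insert x S. h i (i \<in> z))"
    unfolding Pow_insert using insert d by (intro sum.union_disjoint) auto
  also have "(\<Sum>z\<in>Pow S. \<Prod>i\<in>insert x S. h i (i \<in> z)) = (\<Sum>z\<in>Pow S. h x False * (\<Prod>i\<in>S. h i (i \<in> z)))"
  proof (rule sum.cong[OF refl])
    fix z assume "z \<in> Pow S"
    then have "x \<notin> z" using insert by auto
    then show "(\<Prod>i\<in>insert x S. h i (i \<in> z)) = h x False * (\<Prod>i\<in>S. h i (i \<in> z))"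
      using insert by simp
  qed
  also have "(\<Sum>z\<in>insert x ` Pow S. \<Prod>i\<in>insert x S. h i (i \<in> z)) = (\<Sum>z\<in>Pow S. \<Prod>i\<in>insert x S. h i (i \<in> insert x z))"
    by (rule sum.reindex[OF inj, unfolded comp_def])
  also have "\<dots> = (\<Sum>z\<in>Pow S. h x True * (\<Prod>i\<in>S. h i (i \<in> z)))"
  proof (rule sum.cong[OF refl])
    fix z assume "z \<in> Pow S"
    have "(\<Prod>i\<in>S. h i (i \<in> insert x z)) = (\<Prod>i\<in>S. h i (i \<in> z))"
    proof (rule prod.cong[OF refl])
      fix i assume "i \<in> S"
      then have "i \<noteq> x" using insert by auto
      then show "h i (i \<in> insert x z) = h i (i \<in> z)" by simp
    qed
    then show "(\<Prod>i\<in>insert x S. h i (i \<in> insert x z)) = h x True * (\<Prod>i\<in>S. h i (i \<in> z))"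
      using insert by simp
  qed
  finally show ?case using insert
    by (simp add: sum_distrib_left[symmetric] UNIV_bool algebra_simps)
qed

definition rt :: "nat \<Rightarrow> (nat set \<Rightarrow> complex) \<Rightarrow> nat set \<Rightarrow> nat set \<Rightarrow> nat set \<Rightarrow> complex" where
  "rt n psi S w1 w2 = (\<Sum>c\<in>Pow (qubits n - S). psi (w1 \<union> c) * cnj (psi (w2 \<union> c)))"

definition K2 :: "nat set \<Rightarrow> (nat \<Rightarrow> mat2) \<Rightarrow> nat set \<Rightarrow> nat set \<Rightarrow> nat set \<Rightarrow> complex" where
  "K2 S u z w1 w2 = (\<Prod>i\<in>S. u i $ (i \<in> z) $ (i \<in> w1) * cnj (u i $ (i \<in> z) $ (i \<in> w2)))"

lemma finite_qubits[simp]: "finite (qubits n)"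
  by (simp add: qubits_def)

lemma norm_sq_sum:
  "complex_of_real ((cmod (\<Sum>w\<in>A. f w))\<^sup>2) = (\<Sum>w1\<in>A. \<Sum>w2\<in>A. f w1 * cnj (f w2))"
  by (simp only: complex_norm_square) (simp add: sum_product)

lemma op_expand:
  assumes S: "S \<subseteq> qubits n" and z: "z \<subseteq> S"
  shows "complex_of_real (outcome_prob n S u psi z) =
    (\<Sum>p\<in>Pow S \<times> Pow S. K2 S u z (fst p) (snd p) * rt n psi S (fst p) (snd p))"
proof -
  have fS: "finite S" using S by (rule finite_subset) simp
  have "outcome_prob n S u psi z = (\<Sum>c\<in>Pow (qubits n - S). (cmod (apply_local n S u psi (z \<union> c)))\<^sup>2)"
    unfolding outcome_prob_def
    by (rule sum.reindex_bij_witness[of _ "\<lambda>c. z \<union> c" "\<lambda>x. x - S"])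
       (use S z in \<open>auto simp: Int_Diff_Un\<close>)
  also have "\<dots> = (\<Sum>c\<in>Pow (qubits n - S). (cmod (\<Sum>w\<in>Pow S. (\<Prod>i\<in>S. u i $ (i \<in> z) $ (i \<in> w)) * psi (w \<union> c)))\<^sup>2)"
  proof (rule sum.cong[OF refl])
    fix c assume c: "c \<in> Pow (qubits n - S)"
    have "apply_local n S u psi (z \<union> c) = (\<Sum>w\<in>Pow S. (\<Prod>i\<in>S. u i $ (i \<in> z) $ (i \<in> w)) * psi (w \<union> c))"
    proof -
      have e1: "z \<union> c - S = c" using c z by auto
      have e2: "\<And>w. (\<Prod>i\<in>S. u i $ (i \<in> z \<union> c) $ (i \<in> w)) = (\<Prod>i\<in>S. u i $ (i \<in> z) $ (i \<in> w))"
      proof (rule prod.cong[OF refl])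
        fix w i assume "i \<in> S"
        then have "i \<notin> c" using c by auto
        then show "u i $ (i \<in> z \<union> c) $ (i \<in> w) = u i $ (i \<in> z) $ (i \<in> w)" by simp
      qed
      show ?thesis by (simp only: apply_local_def e1 e2)
    qed
    then show "(cmod (apply_local n S u psi (z \<union> c)))\<^sup>2 = (cmod (\<Sum>w\<in>Pow S. (\<Prod>i\<in>S. u i $ (i \<in> z) $ (i \<in> w)) * psi (w \<union> c)))\<^sup>2"
      by simp
  qed
  finally have "complex_of_real (outcome_prob n S u psi z) =
     (\<Sum>c\<in>Pow (qubits n - S). \<Sum>w1\<in>Pow S. \<Sum>w2\<in>Pow S.
        ((\<Prod>i\<in>S. u i $ (i \<in> z) $ (i \<in> w1)) * psi (w1 \<union> c)) * cnj ((\<Prod>i\<in>S. u i $ (i \<in> z) $ (i \<in> w2)) * psi (w2 \<union> c)))"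
    by (simp only: of_real_sum norm_sq_sum)
  also have "\<dots> = (\<Sum>c\<in>Pow (qubits n - S). \<Sum>w1\<in>Pow S. \<Sum>w2\<in>Pow S.
        K2 S u z w1 w2 * (psi (w1 \<union> c) * cnj (psi (w2 \<union> c))))"
    unfolding K2_def by (simp add: prod.distrib cnj_prod mult_ac)
  also have "\<dots> = (\<Sum>w1\<in>Pow S. \<Sum>w2\<in>Pow S. \<Sum>c\<in>Pow (qubits n - S).
        K2 S u z w1 w2 * (psi (w1 \<union> c) * cnj (psi (w2 \<union> c))))"
    by (subst sum.swap) (simp add: sum.swap[of _ "Pow (qubits n - S)"])
  also have "\<dots> = (\<Sum>w1\<in>Pow S. \<Sum>w2\<in>Pow S. K2 S u z w1 w2 * rt n psi S w1 w2)"
    unfolding rt_def by (simp add: sum_distrib_left)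
  also have "\<dots> = (\<Sum>p\<in>Pow S \<times> Pow S. K2 S u z (fst p) (snd p) * rt n psi S (fst p) (snd p))"
    by (simp add: sum.cartesian_product case_prod_beta)
  finally show ?thesis .
qed


lemma K2_sum2:
  assumes "finite S"
  shows "(\<Sum>z\<in>Pow S. K2 S u z w1 w2 * K2 S u z w3 w4) =
    (\<Prod>i\<in>S. gfun (u i) (i \<in> w1) (i \<in> w2) (i \<in> w3) (i \<in> w4))"
  unfolding K2_def prod.distrib[symmetric] gfun_def
  using sum_pow_prod[OF assms, of "\<lambda>i t. u i $ t $ (i \<in> w1) * cnj (u i $ t $ (i \<in> w2)) *
         (u i $ t $ (i \<in> w3) * cnj (u i $ t $ (i \<in> w4)))"]
  by (simp add: mult.assoc)

lemma K2_sum1: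
  assumes "finite S"
  shows "(\<Sum>z\<in>Pow S. K2 S u z w1 w2) =
    (\<Prod>i\<in>S. u i $ False $ (i \<in> w1) * cnj (u i $ False $ (i \<in> w2)) + u i $ True $ (i \<in> w1) * cnj (u i $ True $ (i \<in> w2)))"
  unfolding K2_def
  using sum_pow_prod[OF assms, of "\<lambda>i t. u i $ t $ (i \<in> w1) * cnj (u i $ t $ (i \<in> w2))"]
  by (simp add: UNIV_bool add.commute)

lemma sq_expand:
  assumes S: "S \<subseteq> qubits n"
  shows "complex_of_real (\<Sum>z\<in>Pow S. (outcome_prob n S u psi z)\<^sup>2) =
    (\<Sum>p\<in>Pow S \<times> Pow S. \<Sum>q\<in>Pow S \<times> Pow S.
       (\<Prod>i\<in>S. gfun (u i) (i \<in> fst p) (i \<in> snd p) (i \<in> fst q) (i \<in> snd q)) *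
       (rt n psi S (fst p) (snd p) * rt n psi S (fst q) (snd q)))"
proof -
  have fS: "finite S" using S by (rule finite_subset) simp
  have "complex_of_real (\<Sum>z\<in>Pow S. (outcome_prob n S u psi z)\<^sup>2) =
     (\<Sum>z\<in>Pow S. (\<Sum>p\<in>Pow S \<times> Pow S. K2 S u z (fst p) (snd p) * rt n psi S (fst p) (snd p)) *
                 (\<Sum>q\<in>Pow S \<times> Pow S. K2 S u z (fst q) (snd q) * rt n psi S (fst q) (snd q)))"
    unfolding of_real_sum of_real_power power2_eq_square
    by (intro sum.cong refl) (auto simp: op_expand[OF S])
  also have "\<dots> = (\<Sum>z\<in>Pow S. \<Sum>p\<in>Pow S \<times> Pow S. \<Sum>q\<in>Pow S \<times> Pow S.
       (K2 S u z (fst p) (snd p) * K2 S u z (fst q) (snd q)) * (rt n psi S (fst p) (snd p) * rt n psi S (fst q) (snd q)))"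
    by (simp add: sum_product mult_ac)
  also have "\<dots> = (\<Sum>p\<in>Pow S \<times> Pow S. \<Sum>q\<in>Pow S \<times> Pow S. \<Sum>z\<in>Pow S.
       (K2 S u z (fst p) (snd p) * K2 S u z (fst q) (snd q)) * (rt n psi S (fst p) (snd p) * rt n psi S (fst q) (snd q)))"
    by (simp add: sum.swap[where A="Pow S"])
  also have "\<dots> = (\<Sum>p\<in>Pow S \<times> Pow S. \<Sum>q\<in>Pow S \<times> Pow S.
       (\<Sum>z\<in>Pow S. K2 S u z (fst p) (snd p) * K2 S u z (fst q) (snd q)) * (rt n psi S (fst p) (snd p) * rt n psi S (fst q) (snd q)))"
    by (simp add: sum_distrib_right)
  also have "\<dots> = (\<Sum>p\<in>Pow S \<times> Pow S. \<Sum>q\<in>Pow S \<times> Pow S.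
       (\<Prod>i\<in>S. gfun (u i) (i \<in> fst p) (i \<in> snd p) (i \<in> fst q) (i \<in> snd q)) *
       (rt n psi S (fst p) (snd p) * rt n psi S (fst q) (snd q)))"
    by (simp add: K2_sum2[OF fS])
  finally show ?thesis .
qed

lemma prod_if_const:
  fixes c :: "'a::comm_semiring_1"
  assumes "finite X"
  shows "(\<Prod>i\<in>X. if Q i then c else 0) = (if \<forall>i\<in>X. Q i then c ^ card X else 0)"
proof (cases "\<forall>i\<in>X. Q i")
  case True
  then have "(\<Prod>i\<in>X. if Q i then c else 0) = (\<Prod>i\<in>X. c)" by (intro prod.cong) auto
  then show ?thesis using True by simp
next
  case False
  then obtain x where "x \<in> X" "\<not> Q x" by auto
  then have "(\<Prod>i\<in>X. if Q i then c else 0) = 0" using assms by (intro prod_zero) auto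
  then show ?thesis using \<open>x \<in> X\<close> \<open>\<not> Q x\<close> by auto
qed

lemma pure_total:
  assumes S: "S \<subseteq> qubits n" and pure: "is_pure_state n psi"
  shows "(\<Sum>w\<in>Pow S. rt n psi S w w) = 1"
proof -
  have "(\<Sum>w\<in>Pow S. rt n psi S w w) = (\<Sum>w\<in>Pow S. \<Sum>c\<in>Pow (qubits n - S). complex_of_real ((cmod (psi (w \<union> c)))\<^sup>2))"
    unfolding rt_def by (simp only: complex_norm_square)
  also have "\<dots> = (\<Sum>x\<in>Pow (S \<union> (qubits n - S)). complex_of_real ((cmod (psi x))\<^sup>2))"
    by (rule pow_split[symmetric]) auto
  also have "S \<union> (qubits n - S) = qubits n" using S by auto
  finally show ?thesis using pure unfolding is_pure_state_def
    by (metis of_real_1 of_real_sum)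
qed

lemma op_total:
  assumes S: "S \<subseteq> qubits n" and pure: "is_pure_state n psi" and u: "\<And>i. i \<in> S \<Longrightarrow> u i \<in> U2"
  shows "(\<Sum>z\<in>Pow S. outcome_prob n S u psi z) = 1"
proof -
  have fS: "finite S" using S by (rule finite_subset) simp
  have "complex_of_real (\<Sum>z\<in>Pow S. outcome_prob n S u psi z) =
     (\<Sum>z\<in>Pow S. \<Sum>p\<in>Pow S \<times> Pow S. K2 S u z (fst p) (snd p) * rt n psi S (fst p) (snd p))"
    unfolding of_real_sum by (intro sum.cong refl) (auto intro!: op_expand[OF S])
  also have "\<dots> = (\<Sum>p\<in>Pow S \<times> Pow S. (\<Sum>z\<in>Pow S. K2 S u z (fst p) (snd p)) * rt n psi S (fst p) (snd p))"
    by (subst sum.swap) (simp add: sum_distrib_right)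
  also have "\<dots> = (\<Sum>p\<in>Pow S \<times> Pow S. (if fst p = snd p then rt n psi S (fst p) (snd p) else 0))"
  proof (rule sum.cong[OF refl])
    fix p assume p: "p \<in> Pow S \<times> Pow S"
    have "(\<Sum>z\<in>Pow S. K2 S u z (fst p) (snd p)) = (\<Prod>i\<in>S. if (i \<in> fst p) = (i \<in> snd p) then 1 else 0)"
      unfolding K2_sum1[OF fS] by (intro prod.cong refl) (simp add: U2_colsum u)
    also have "\<dots> = (if fst p = snd p then 1 else 0)"
      using p by (auto simp: prod_if_const fS)
    finally show "(\<Sum>z\<in>Pow S. K2 S u z (fst p) (snd p)) * rt n psi S (fst p) (snd p) =
       (if fst p = snd p then rt n psi S (fst p) (snd p) else 0)" by simp
  qed
  also have "\<dots> = (\<Sum>w1\<in>Pow S. \<Sum>w2\<in>Pow S. (if w1 = w2 then rt n psi S w1 w2 else 0))"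
    by (simp add: sum.cartesian_product case_prod_beta)
  also have "\<dots> = (\<Sum>w\<in>Pow S. rt n psi S w w)"
    by (simp add: fS)
  also have "\<dots> = 1" by (rule pure_total[OF S pure])
  finally show ?thesis by (metis of_real_eq_1_iff)
qed



lemma block_sum:
  assumes aS: "\<alpha> \<subseteq> S" and S: "S \<subseteq> qubits n"
  shows "(\<Sum>p\<in>Pow S \<times> Pow S. if fst p - \<alpha> = snd p - \<alpha> then rt n psi S (fst p) (snd p) * G (fst p \<inter> \<alpha>) (snd p \<inter> \<alpha>) else 0)
    = (\<Sum>a\<in>Pow \<alpha>. \<Sum>b\<in>Pow \<alpha>. reduced_state n psi \<alpha> a b * G a b)"
proof -
  have SU: "\<alpha> \<union> (S - \<alpha>) = S" using aS by auto
  have fS: "finite S" using S by (rule finite_subset) simp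
  have split: "\<And>g. (\<Sum>w\<in>Pow S. g w) = (\<Sum>a\<in>Pow \<alpha>. \<Sum>e\<in>Pow (S - \<alpha>). g (a \<union> e))"
    using pow_split[of \<alpha> "S - \<alpha>"] unfolding SU by auto
  have red: "(\<Sum>e\<in>Pow (S - \<alpha>). rt n psi S (a \<union> e) (b \<union> e)) = reduced_state n psi \<alpha> a b" for a b
  proof -
    have QU: "(S - \<alpha>) \<union> (qubits n - S) = qubits n - \<alpha>" using aS S by auto
    have "reduced_state n psi \<alpha> a b = (\<Sum>x\<in>Pow ((S - \<alpha>) \<union> (qubits n - S)). psi (a \<union> x) * cnj (psi (b \<union> x)))"
      unfolding reduced_state_def QU ..
    also have "\<dots> = (\<Sum>e\<in>Pow (S - \<alpha>). \<Sum>c\<in>Pow (qubits n - S). psi (a \<union> (e \<union> c)) * cnj (psi (b \<union> (e \<union> c))))"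
      by (rule pow_split) auto
    also have "\<dots> = (\<Sum>e\<in>Pow (S - \<alpha>). rt n psi S (a \<union> e) (b \<union> e))"
      unfolding rt_def by (simp add: Un_assoc)
    finally show ?thesis by simp
  qed
  let ?F = "\<lambda>w1 w2. if w1 - \<alpha> = w2 - \<alpha> then rt n psi S w1 w2 * G (w1 \<inter> \<alpha>) (w2 \<inter> \<alpha>) else 0"
  have "(\<Sum>p\<in>Pow S \<times> Pow S. ?F (fst p) (snd p)) = (\<Sum>w1\<in>Pow S. \<Sum>w2\<in>Pow S. ?F w1 w2)"
    by (simp add: sum.cartesian_product case_prod_beta)
  also have "\<dots> = (\<Sum>a\<in>Pow \<alpha>. \<Sum>e\<in>Pow (S - \<alpha>). \<Sum>b\<in>Pow \<alpha>. \<Sum>f\<in>Pow (S - \<alpha>). ?F (a \<union> e) (b \<union> f))"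
    by (simp only: split)
  also have "\<dots> = (\<Sum>a\<in>Pow \<alpha>. \<Sum>e\<in>Pow (S - \<alpha>). \<Sum>b\<in>Pow \<alpha>. \<Sum>f\<in>Pow (S - \<alpha>).
       if e = f then rt n psi S (a \<union> e) (b \<union> f) * G a b else 0)"
  proof (intro sum.cong refl)
    fix a e b f assume "a \<in> Pow \<alpha>" "e \<in> Pow (S - \<alpha>)" "b \<in> Pow \<alpha>" "f \<in> Pow (S - \<alpha>)"
    then have eqs: "a \<union> e - \<alpha> = e" "b \<union> f - \<alpha> = f" "(a \<union> e) \<inter> \<alpha> = a" "(b \<union> f) \<inter> \<alpha> = b" by auto
    show "?F (a \<union> e) (b \<union> f) = (if e = f then rt n psi S (a \<union> e) (b \<union> f) * G a b else 0)"
      by (simp only: eqs)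
  qed
  also have "\<dots> = (\<Sum>a\<in>Pow \<alpha>. \<Sum>e\<in>Pow (S - \<alpha>). \<Sum>b\<in>Pow \<alpha>. rt n psi S (a \<union> e) (b \<union> e) * G a b)"
    by (intro sum.cong refl) (simp add: fS sum.delta sum.delta')
  also have "\<dots> = (\<Sum>a\<in>Pow \<alpha>. \<Sum>b\<in>Pow \<alpha>. (\<Sum>e\<in>Pow (S - \<alpha>). rt n psi S (a \<union> e) (b \<union> e)) * G a b)"
    by (simp add: sum.swap[of _ "Pow (S - \<alpha>)"] sum_distrib_right)
  also have "\<dots> = (\<Sum>a\<in>Pow \<alpha>. \<Sum>b\<in>Pow \<alpha>. reduced_state n psi \<alpha> a b * G a b)"
    by (simp add: red)
  finally show ?thesis .
qed


lemma sum_delta2: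
  assumes "x \<in> A" "y \<in> B" "finite A" "finite B"
  shows "(\<Sum>a\<in>A. \<Sum>b\<in>B. if a = x \<and> b = y then r else 0) = r"
proof -
  have "(\<Sum>b\<in>B. if a = x \<and> b = y then r else 0) = (if a = x then r else 0)" for a
    using assms by (cases "a = x") simp_all
  then show ?thesis using assms by simp
qed

lemma alpha_sum:
  assumes aS: "\<alpha> \<subseteq> S" and S: "S \<subseteq> qubits n"
  shows "(\<Sum>p\<in>Pow S \<times> Pow S. \<Sum>q\<in>Pow S \<times> Pow S.
      if fst p \<inter> \<alpha> = snd q \<inter> \<alpha> \<and> fst q \<inter> \<alpha> = snd p \<inter> \<alpha> \<and> fst p - \<alpha> = snd p - \<alpha> \<and> fst q - \<alpha> = snd q - \<alpha>
      then rt n psi S (fst p) (snd p) * rt n psi S (fst q) (snd q) else 0)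
    = (\<Sum>a\<in>Pow \<alpha>. \<Sum>b\<in>Pow \<alpha>. reduced_state n psi \<alpha> a b * reduced_state n psi \<alpha> b a)"
proof -
  have fa: "finite \<alpha>" using aS S by (meson finite_qubits finite_subset)
  have inner: "(\<Sum>q\<in>Pow S \<times> Pow S.
      if fst p \<inter> \<alpha> = snd q \<inter> \<alpha> \<and> fst q \<inter> \<alpha> = snd p \<inter> \<alpha> \<and> fst p - \<alpha> = snd p - \<alpha> \<and> fst q - \<alpha> = snd q - \<alpha>
      then rt n psi S (fst p) (snd p) * rt n psi S (fst q) (snd q) else 0)
    = (if fst p - \<alpha> = snd p - \<alpha> then rt n psi S (fst p) (snd p) * reduced_state n psi \<alpha> (snd p \<inter> \<alpha>) (fst p \<inter> \<alpha>) else 0)"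
    for p
  proof (cases "fst p - \<alpha> = snd p - \<alpha>")
    case True
    define G where "G a b = (if a = snd p \<inter> \<alpha> \<and> b = fst p \<inter> \<alpha> then 1 else (0::complex))" for a b
    have "(\<Sum>q\<in>Pow S \<times> Pow S.
      if fst p \<inter> \<alpha> = snd q \<inter> \<alpha> \<and> fst q \<inter> \<alpha> = snd p \<inter> \<alpha> \<and> fst p - \<alpha> = snd p - \<alpha> \<and> fst q - \<alpha> = snd q - \<alpha>
      then rt n psi S (fst p) (snd p) * rt n psi S (fst q) (snd q) else 0)
      = rt n psi S (fst p) (snd p) * (\<Sum>q\<in>Pow S \<times> Pow S. if fst q - \<alpha> = snd q - \<alpha> then rt n psi S (fst q) (snd q) * G (fst q \<inter> \<alpha>) (snd q \<inter> \<alpha>) else 0)"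
      unfolding sum_distrib_left using True by (intro sum.cong refl) (auto simp: G_def)
    also have "\<dots> = rt n psi S (fst p) (snd p) * (\<Sum>a\<in>Pow \<alpha>. \<Sum>b\<in>Pow \<alpha>. reduced_state n psi \<alpha> a b * G a b)"
      by (simp only: block_sum[OF aS S])
    also have "\<dots> = rt n psi S (fst p) (snd p) * reduced_state n psi \<alpha> (snd p \<inter> \<alpha>) (fst p \<inter> \<alpha>)"
      by (simp add: G_def fa if_distrib[of "\<lambda>x. _ * x"] sum_delta2 cong: if_cong)
    finally show ?thesis using True by simp
  next
    case False
    then show ?thesis by simp
  qed
  have "(\<Sum>p\<in>Pow S \<times> Pow S. \<Sum>q\<in>Pow S \<times> Pow S.
      if fst p \<inter> \<alpha> = snd q \<inter> \<alpha> \<and> fst q \<inter> \<alpha> = snd p \<inter> \<alpha> \<and> fst p - \<alpha> = snd p - \<alpha> \<and> fst q - \<alpha> = snd q - \<alpha>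
      then rt n psi S (fst p) (snd p) * rt n psi S (fst q) (snd q) else 0)
    = (\<Sum>p\<in>Pow S \<times> Pow S. if fst p - \<alpha> = snd p - \<alpha> then rt n psi S (fst p) (snd p) *
         (\<lambda>a b. reduced_state n psi \<alpha> b a) (fst p \<inter> \<alpha>) (snd p \<inter> \<alpha>) else 0)"
    by (simp only: inner)
  also have "\<dots> = (\<Sum>a\<in>Pow \<alpha>. \<Sum>b\<in>Pow \<alpha>. reduced_state n psi \<alpha> a b * reduced_state n psi \<alpha> b a)"
    by (rule block_sum[OF aS S])
  finally show ?thesis .
qed

definition hv :: "bool \<Rightarrow> bool \<Rightarrow> bool \<Rightarrow> bool \<Rightarrow> complex" where
  "hv a b c d = (if a = b \<and> c = d then 1/3 else 0) + (if a = d \<and> c = b then 1/3 else 0)"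

lemma diff_eq_iff:
  assumes "A \<subseteq> S" "B \<subseteq> S"
  shows "(\<forall>i\<in>S - X. (i \<in> A) = (i \<in> B)) \<longleftrightarrow> A - X = B - X"
  using assms by auto

lemma hv_prod:
  assumes fS: "finite S" and p: "p \<in> Pow S \<times> Pow S" and q: "q \<in> Pow S \<times> Pow S"
  shows "(\<Prod>i\<in>S. hv (i \<in> fst p) (i \<in> snd p) (i \<in> fst q) (i \<in> snd q)) =
    (1/3) ^ card S * (\<Sum>\<alpha>\<in>Pow S. if fst p \<inter> \<alpha> = snd q \<inter> \<alpha> \<and> fst q \<inter> \<alpha> = snd p \<inter> \<alpha> \<and> fst p - \<alpha> = snd p - \<alpha> \<and> fst q - \<alpha> = snd q - \<alpha> then 1 else 0)"
proof -
  define f1 where "f1 i = (if (i \<in> fst p) = (i \<in> snd q) \<and> (i \<in> fst q) = (i \<in> snd p) then 1/3 else (0::complex))" for i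
  define f2 where "f2 i = (if (i \<in> fst p) = (i \<in> snd p) \<and> (i \<in> fst q) = (i \<in> snd q) then 1/3 else (0::complex))" for i
  have "(\<Prod>i\<in>S. hv (i \<in> fst p) (i \<in> snd p) (i \<in> fst q) (i \<in> snd q)) = (\<Prod>i\<in>S. f1 i + f2 i)"
    unfolding hv_def f1_def f2_def by (intro prod.cong refl) (auto simp: add.commute)
  also have "\<dots> = (\<Sum>X\<in>Pow S. (\<Prod>i\<in>X. f1 i) * (\<Prod>i\<in>S - X. f2 i))"
    by (rule prod_add[OF fS])
  also have "\<dots> = (\<Sum>X\<in>Pow S. (1/3) ^ card S * (if fst p \<inter> X = snd q \<inter> X \<and> fst q \<inter> X = snd p \<inter> X \<and> fst p - X = snd p - X \<and> fst q - X = snd q - X then 1 else 0))"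
  proof (rule sum.cong[OF refl])
    fix X assume X: "X \<in> Pow S"
    have fX: "finite X" using X fS finite_subset by auto
    have c1: "(\<forall>i\<in>X. (i \<in> fst p) = (i \<in> snd q) \<and> (i \<in> fst q) = (i \<in> snd p)) \<longleftrightarrow> fst p \<inter> X = snd q \<inter> X \<and> fst q \<inter> X = snd p \<inter> X"
      by blast
    have c2: "(\<forall>i\<in>S - X. (i \<in> fst p) = (i \<in> snd p) \<and> (i \<in> fst q) = (i \<in> snd q)) \<longleftrightarrow> fst p - X = snd p - X \<and> fst q - X = snd q - X"
    proof -
      have sub: "fst p \<subseteq> S" "snd p \<subseteq> S" "fst q \<subseteq> S" "snd q \<subseteq> S" using p q by auto
      show ?thesis unfolding ball_conj_distrib diff_eq_iff[OF sub(1,2)] diff_eq_iff[OF sub(3,4)] ..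
    qed
    have XS: "X \<subseteq> S" using X by simp
    have cd: "card X + card (S - X) = card S"
      using card_Diff_subset[OF fX XS] card_mono[OF fS XS] by simp
    have "(\<Prod>i\<in>X. f1 i) * (\<Prod>i\<in>S - X. f2 i) =
       (if fst p \<inter> X = snd q \<inter> X \<and> fst q \<inter> X = snd p \<inter> X then (1/3) ^ card X else 0) *
       (if fst p - X = snd p - X \<and> fst q - X = snd q - X then (1/3) ^ card (S - X) else 0)"
      unfolding f1_def f2_def prod_if_const[OF fX] prod_if_const[OF finite_Diff[OF fS]] c1 c2 ..
    also have "\<dots> = (1/3) ^ card S * (if fst p \<inter> X = snd q \<inter> X \<and> fst q \<inter> X = snd p \<inter> X \<and> fst p - X = snd p - X \<and> fst q - X = snd q - X then 1 else 0)"
      by (simp add: power_add[symmetric] cd)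
    finally show "(\<Prod>i\<in>X. f1 i) * (\<Prod>i\<in>S - X. f2 i) = (1/3) ^ card S * (if fst p \<inter> X = snd q \<inter> X \<and> fst q \<inter> X = snd p \<inter> X \<and> fst p - X = snd p - X \<and> fst q - X = snd q - X then 1 else 0)" .
  qed
  also have "\<dots> = (1/3) ^ card S * (\<Sum>\<alpha>\<in>Pow S. if fst p \<inter> \<alpha> = snd q \<inter> \<alpha> \<and> fst q \<inter> \<alpha> = snd p \<inter> \<alpha> \<and> fst p - \<alpha> = snd p - \<alpha> \<and> fst q - \<alpha> = snd q - \<alpha> then 1 else 0)"
    by (simp add: sum_distrib_left)
  finally show ?thesis .
qed

lemma swap3: "(\<Sum>p\<in>P. \<Sum>q\<in>Q. \<Sum>a\<in>A. F p q a) = (\<Sum>a\<in>A. \<Sum>p\<in>P. \<Sum>q\<in>Q. (F p q a :: complex))"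
proof -
  have "(\<Sum>p\<in>P. \<Sum>q\<in>Q. \<Sum>a\<in>A. F p q a) = (\<Sum>p\<in>P. \<Sum>a\<in>A. \<Sum>q\<in>Q. F p q a)"
    by (rule sum.cong[OF refl]) (rule sum.swap)
  also have "\<dots> = (\<Sum>a\<in>A. \<Sum>p\<in>P. \<Sum>q\<in>Q. F p q a)" by (rule sum.swap)
  finally show ?thesis .
qed

lemma comb_total:
  assumes S: "S \<subseteq> qubits n"
  shows "(\<Sum>p\<in>Pow S \<times> Pow S. \<Sum>q\<in>Pow S \<times> Pow S.
       (\<Prod>i\<in>S. hv (i \<in> fst p) (i \<in> snd p) (i \<in> fst q) (i \<in> snd q)) *
       (rt n psi S (fst p) (snd p) * rt n psi S (fst q) (snd q)))
    = (1/3) ^ card S * (\<Sum>\<alpha>\<in>Pow S. \<Sum>a\<in>Pow \<alpha>. \<Sum>b\<in>Pow \<alpha>. reduced_state n psi \<alpha> a b * reduced_state n psi \<alpha> b a)"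
proof -
  have fS: "finite S" using S by (rule finite_subset) simp
  have "(\<Sum>p\<in>Pow S \<times> Pow S. \<Sum>q\<in>Pow S \<times> Pow S.
       (\<Prod>i\<in>S. hv (i \<in> fst p) (i \<in> snd p) (i \<in> fst q) (i \<in> snd q)) *
       (rt n psi S (fst p) (snd p) * rt n psi S (fst q) (snd q)))
    = (\<Sum>p\<in>Pow S \<times> Pow S. \<Sum>q\<in>Pow S \<times> Pow S. (1/3) ^ card S * (\<Sum>\<alpha>\<in>Pow S.
       if fst p \<inter> \<alpha> = snd q \<inter> \<alpha> \<and> fst q \<inter> \<alpha> = snd p \<inter> \<alpha> \<and> fst p - \<alpha> = snd p - \<alpha> \<and> fst q - \<alpha> = snd q - \<alpha>
       then rt n psi S (fst p) (snd p) * rt n psi S (fst q) (snd q) else 0))"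
  proof (intro sum.cong refl)
    fix p q assume p: "p \<in> Pow S \<times> Pow S" and q: "q \<in> Pow S \<times> Pow S"
    show "(\<Prod>i\<in>S. hv (i \<in> fst p) (i \<in> snd p) (i \<in> fst q) (i \<in> snd q)) *
       (rt n psi S (fst p) (snd p) * rt n psi S (fst q) (snd q)) = (1/3) ^ card S * (\<Sum>\<alpha>\<in>Pow S.
       if fst p \<inter> \<alpha> = snd q \<inter> \<alpha> \<and> fst q \<inter> \<alpha> = snd p \<inter> \<alpha> \<and> fst p - \<alpha> = snd p - \<alpha> \<and> fst q - \<alpha> = snd q - \<alpha>
       then rt n psi S (fst p) (snd p) * rt n psi S (fst q) (snd q) else 0)"
      unfolding hv_prod[OF fS p q] mult.assoc sum_distrib_right by (intro arg_cong2[where f="(*)"] refl sum.cong) simp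
  qed
  also have "\<dots> = (1/3) ^ card S * (\<Sum>\<alpha>\<in>Pow S. \<Sum>p\<in>Pow S \<times> Pow S. \<Sum>q\<in>Pow S \<times> Pow S.
       if fst p \<inter> \<alpha> = snd q \<inter> \<alpha> \<and> fst q \<inter> \<alpha> = snd p \<inter> \<alpha> \<and> fst p - \<alpha> = snd p - \<alpha> \<and> fst q - \<alpha> = snd q - \<alpha>
       then rt n psi S (fst p) (snd p) * rt n psi S (fst q) (snd q) else 0)"
    by (subst swap3[symmetric]) (simp only: sum_distrib_left)
  also have "\<dots> = (1/3) ^ card S * (\<Sum>\<alpha>\<in>Pow S. \<Sum>a\<in>Pow \<alpha>. \<Sum>b\<in>Pow \<alpha>. reduced_state n psi \<alpha> a b * reduced_state n psi \<alpha> b a)"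
    by (rule arg_cong2[where f="(*)"], rule refl, rule sum.cong[OF refl], rule alpha_sum) (use S in auto)
  finally show ?thesis .
qed

lemma purity_eq:
  assumes pure: "is_pure_state n psi"
  shows "purity n psi \<alpha> = Re (\<Sum>a\<in>Pow \<alpha>. \<Sum>b\<in>Pow \<alpha>. reduced_state n psi \<alpha> a b * reduced_state n psi \<alpha> b a)"
proof (cases "\<alpha> = {}")
  case True
  have "reduced_state n psi {} {} {} = (\<Sum>c\<in>Pow (qubits n). complex_of_real ((cmod (psi c))\<^sup>2))"
    unfolding reduced_state_def complex_norm_square by simp
  also have "\<dots> = 1" using pure unfolding is_pure_state_def by (metis of_real_1 of_real_sum)
  finally show ?thesis using True by (simp add: purity_def)
next
  case False
  then show ?thesis by (simp add: purity_def)
qed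



lemma prod_reindex_pair: "(\<Prod>i\<in>S. f i (U (l, i))) = (\<Prod>k\<in>{l} \<times> S. f (snd k) (U k))"
proof -
  have e: "{l} \<times> S = Pair l ` S" by auto
  have i: "inj_on (Pair l) S" by (auto simp: inj_on_def)
  show ?thesis unfolding e prod.reindex[OF i] by simp
qed

lemma prod_pair2: "(\<Prod>k\<in>{l} \<times> S. h k) = (\<Prod>i\<in>S. h (l, i))"
proof -
  have e: "{l} \<times> S = Pair l ` S" by auto
  have i: "inj_on (Pair l) S" by (auto simp: inj_on_def)
  show ?thesis unfolding e prod.reindex[OF i] by simp
qed

lemma hE_hv: "haar_U2 H \<Longrightarrow> hE H a b c d = hv a b c d"
  unfolding hv_def by (rule haar_gfun)

context
  fixes H :: "mat2 measure"
  assumes haar: "haar_U2 H"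
begin

lemma PS: "product_sigma_finite (\<lambda>_. H)"
  unfolding product_sigma_finite_def using H_prob[OF haar] prob_space_imp_sigma_finite by blast

lemma block_expect:
  fixes l :: nat
  assumes S: "S \<subseteq> qubits n" and pure: "is_pure_state n psi"
  shows "integrable (Pi\<^sub>M ({l} \<times> S) (\<lambda>_. H)) (\<lambda>U. \<Sum>z\<in>Pow S. (outcome_prob n S (\<lambda>i. U (l, i)) psi z)\<^sup>2)"
    and "(\<integral>U. (\<Sum>z\<in>Pow S. (outcome_prob n S (\<lambda>i. U (l, i)) psi z)\<^sup>2) \<partial>Pi\<^sub>M ({l} \<times> S) (\<lambda>_. H))
          = (1/3) ^ card S * (\<Sum>\<alpha>\<in>Pow S. purity n psi \<alpha>)"
proof -
  interpret product_sigma_finite "\<lambda>_. H" by (rule PS)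
  have fS: "finite S" using S by (rule finite_subset) simp
  define T where "T p q U = (\<Prod>k\<in>{l} \<times> S. gfun (U k) (snd k \<in> fst p) (snd k \<in> snd p) (snd k \<in> fst q) (snd k \<in> snd q))"
    for p q :: "nat set \<times> nat set" and U :: "nat \<times> nat \<Rightarrow> mat2"
  let ?f = "\<lambda>U. \<Sum>z\<in>Pow S. (outcome_prob n S (\<lambda>i. U (l, i)) psi z)\<^sup>2"
  let ?M = "Pi\<^sub>M ({l} \<times> S) (\<lambda>_. H)"
  have eq: "(\<lambda>U. complex_of_real (?f U)) = (\<lambda>U. \<Sum>p\<in>Pow S \<times> Pow S. \<Sum>q\<in>Pow S \<times> Pow S.
       T p q U * (rt n psi S (fst p) (snd p) * rt n psi S (fst q) (snd q)))"
    unfolding T_def prod_pair2 snd_conv by (rule ext) (simp only: sq_expand[OF S])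
  have intT: "integrable ?M (T p q)" for p q
    unfolding T_def by (rule product_integrable_prod) (simp_all add: fS gfun_integrable[OF haar])
  have intT2: "integral\<^sup>L ?M (T p q) = (\<Prod>i\<in>S. hv (i \<in> fst p) (i \<in> snd p) (i \<in> fst q) (i \<in> snd q))" for p q
  proof -
    have "integral\<^sup>L ?M (T p q) = (\<Prod>k\<in>{l} \<times> S. hE H (snd k \<in> fst p) (snd k \<in> snd p) (snd k \<in> fst q) (snd k \<in> snd q))"
      unfolding T_def hE_def by (rule product_integral_prod) (simp_all add: fS gfun_integrable[OF haar])
    also have "\<dots> = (\<Prod>i\<in>S. hv (i \<in> fst p) (i \<in> snd p) (i \<in> fst q) (i \<in> snd q))"
      unfolding hE_hv[OF haar] prod_pair2 snd_conv ..
    finally show ?thesis .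
  qed
  have intC: "integrable ?M (\<lambda>U. complex_of_real (?f U))"
    unfolding eq
    by (intro Bochner_Integration.integrable_sum integrable_mult_left intT)
  have "integrable ?M (\<lambda>U. Re (complex_of_real (?f U)))"
    using intC by (rule integrable_Re)
  then show "integrable ?M ?f" by simp
  have "complex_of_real (integral\<^sup>L ?M ?f) = integral\<^sup>L ?M (\<lambda>U. complex_of_real (?f U))"
    by (rule integral_complex_of_real[symmetric])
  also have "\<dots> = (\<Sum>p\<in>Pow S \<times> Pow S. \<Sum>q\<in>Pow S \<times> Pow S.
       (\<Prod>i\<in>S. hv (i \<in> fst p) (i \<in> snd p) (i \<in> fst q) (i \<in> snd q)) * (rt n psi S (fst p) (snd p) * rt n psi S (fst q) (snd q)))"
    unfolding eq by (simp add: Bochner_Integration.integral_sum Bochner_Integration.integrable_sum integrable_mult_left intT intT2)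
  also have "\<dots> = (1/3) ^ card S * (\<Sum>\<alpha>\<in>Pow S. \<Sum>a\<in>Pow \<alpha>. \<Sum>b\<in>Pow \<alpha>. reduced_state n psi \<alpha> a b * reduced_state n psi \<alpha> b a)"
    by (rule comb_total[OF S])
  finally have "integral\<^sup>L ?M ?f = Re ((1/3) ^ card S * (\<Sum>\<alpha>\<in>Pow S. \<Sum>a\<in>Pow \<alpha>. \<Sum>b\<in>Pow \<alpha>. reduced_state n psi \<alpha> a b * reduced_state n psi \<alpha> b a))"
    by (metis Re_complex_of_real)
  also have "\<dots> = (1/3) ^ card S * (\<Sum>\<alpha>\<in>Pow S. Re (\<Sum>a\<in>Pow \<alpha>. \<Sum>b\<in>Pow \<alpha>. reduced_state n psi \<alpha> a b * reduced_state n psi \<alpha> b a))"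
  proof -
    have "(1/3::complex) ^ card S = complex_of_real ((1/3) ^ card S)" by simp
    then show ?thesis by (simp only:) (simp add: Re_sum)
  qed
  also have "\<dots> = (1/3) ^ card S * (\<Sum>\<alpha>\<in>Pow S. purity n psi \<alpha>)"
    by (simp add: purity_eq[OF pure])
  finally show "integral\<^sup>L ?M ?f = (1/3) ^ card S * (\<Sum>\<alpha>\<in>Pow S. purity n psi \<alpha>)" .
qed

end


lemma sum_PiE_insert:
  assumes "a \<notin> J"
  shows "(\<Sum>x\<in>(\<Pi>\<^sub>E l\<in>insert a J. T l). f x) = (\<Sum>t\<in>T a. \<Sum>y\<in>(\<Pi>\<^sub>E l\<in>J. T l). f (y(a := t)))"
proof -
  have "(\<Sum>x\<in>(\<Pi>\<^sub>E l\<in>insert a J. T l). f x) = (\<Sum>p\<in>T a \<times> (\<Pi>\<^sub>E l\<in>J. T l). f ((\<lambda>(y, g). g(a := y)) p))"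
    unfolding PiE_insert_eq by (rule sum.reindex[OF inj_combinator[OF assms], unfolded comp_def])
  also have "\<dots> = (\<Sum>t\<in>T a. \<Sum>y\<in>(\<Pi>\<^sub>E l\<in>J. T l). f (y(a := t)))"
    by (subst sum.cartesian_product) (simp add: case_prod_beta)
  finally show ?thesis .
qed

lemma sum_PiE_union:
  assumes "A \<inter> C = {}"
  shows "(\<Sum>x\<in>(\<Pi>\<^sub>E l\<in>A \<union> C. T l). f x) =
    (\<Sum>a\<in>(\<Pi>\<^sub>E l\<in>A. T l). \<Sum>c\<in>(\<Pi>\<^sub>E l\<in>C. T l). f (\<lambda>l. if l \<in> A then a l else c l))"
proof -
  have "(\<Sum>x\<in>(\<Pi>\<^sub>E l\<in>A \<union> C. T l). f x) =
     (\<Sum>p\<in>(\<Pi>\<^sub>E l\<in>A. T l) \<times> (\<Pi>\<^sub>E l\<in>C. T l). f (\<lambda>l. if l \<in> A then fst p l else snd p l))"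
    by (rule sum.reindex_bij_witness[of _ "\<lambda>p l. if l \<in> A then fst p l else snd p l" "\<lambda>x. (restrict x A, restrict x C)"])
       (use assms in \<open>auto simp: PiE_iff extensional_def fun_eq_iff intro!: arg_cong[where f=f]\<close>)
  then show ?thesis by (simp add: sum.cartesian_product case_prod_beta)
qed

lemma sum_bool: "(\<Sum>t\<in>UNIV. g t) = g False + g (True::bool)"
  by (simp add: UNIV_bool add.commute)

lemma if_sq: "(if t then 1 else 0) * (if t then 1 else (0::real)) = (if t then 1 else 0)"
  by simp

definition qw :: "real \<Rightarrow> bool \<Rightarrow> real" where "qw p t = (if t then p else 1 - p)"
definition Wt :: "real \<Rightarrow> nat set \<Rightarrow> (nat \<Rightarrow> bool) \<Rightarrow> real" where "Wt p J y = (\<Prod>l\<in>J. qw p (y l))"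
definition kc :: "nat set \<Rightarrow> (nat \<Rightarrow> bool) \<Rightarrow> real" where "kc J y = (\<Sum>l\<in>J. if y l then 1 else 0)"

lemma Wt_upd: assumes "a \<notin> J" "finite J" shows "Wt p (insert a J) (y(a := t)) = qw p t * Wt p J y"
proof -
  have "(\<Prod>l\<in>J. qw p ((y(a := t)) l)) = (\<Prod>l\<in>J. qw p (y l))" using assms by (intro prod.cong) auto
  then show ?thesis using assms by (simp add: Wt_def)
qed

lemma kc_upd: assumes "a \<notin> J" "finite J" shows "kc (insert a J) (y(a := t)) = (if t then 1 else 0) + kc J y"
proof -
  have "(\<Sum>l\<in>J. if (y(a := t)) l then 1 else (0::real)) = (\<Sum>l\<in>J. if y l then 1 else 0)" using assms by (intro sum.cong) auto
  then show ?thesis using assms by (simp add: kc_def)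
qed

lemma moments:
  fixes p :: real
  assumes "finite J"
  shows "(\<Sum>y\<in>(\<Pi>\<^sub>E l\<in>J. (UNIV::bool set)). Wt p J y) = 1"
    and "(\<Sum>y\<in>(\<Pi>\<^sub>E l\<in>J. (UNIV::bool set)). Wt p J y * kc J y) = card J * p"
    and "(\<Sum>y\<in>(\<Pi>\<^sub>E l\<in>J. (UNIV::bool set)). Wt p J y * (kc J y)\<^sup>2) = real (card J) * p + real (card J) * (real (card J) - 1) * p\<^sup>2"
  using assms
proof (induction J rule: finite_induct)
  case empty
  { case 1 show ?case by (simp add: Wt_def) }
  { case 2 show ?case by (simp add: Wt_def kc_def) }
  { case 3 show ?case by (simp add: Wt_def kc_def) }
next
  case (insert a J)
  let ?X = "\<Pi>\<^sub>E l\<in>J. (UNIV::bool set)"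
  have m0: "(\<Sum>y\<in>?X. Wt p J y) = 1" by (rule insert.IH(1))
  have m1: "(\<Sum>y\<in>?X. Wt p J y * kc J y) = card J * p" by (rule insert.IH(2))
  have m2: "(\<Sum>y\<in>?X. Wt p J y * (kc J y)\<^sup>2) = real (card J) * p + real (card J) * (real (card J) - 1) * p\<^sup>2" by (rule insert.IH(3))
  have m1c: "(\<Sum>y\<in>?X. kc J y * Wt p J y) = card J * p" using m1 by (simp add: mult.commute)
  have m2c: "(\<Sum>y\<in>?X. kc J y * (kc J y * Wt p J y)) = real (card J) * p + real (card J) * (real (card J) - 1) * p\<^sup>2"
    using m2 by (simp add: mult_ac power2_eq_square)
  have e: "(\<Sum>x\<in>(\<Pi>\<^sub>E l\<in>insert a J. (UNIV::bool set)). f x) = (\<Sum>t\<in>UNIV. \<Sum>y\<in>?X. f (y(a := t)))" for f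
    by (rule sum_PiE_insert[OF insert.hyps(2)])
  { case 1 show ?case unfolding e using insert.hyps
      by (simp add: Wt_upd sum_bool sum_distrib_left[symmetric] m0 qw_def) }
  { case 2
    have "(\<Sum>t\<in>UNIV. \<Sum>y\<in>?X. Wt p (insert a J) (y(a := t)) * kc (insert a J) (y(a := t))) =
        (\<Sum>t\<in>UNIV. qw p t * ((if t then 1 else 0) * (\<Sum>y\<in>?X. Wt p J y) + (\<Sum>y\<in>?X. Wt p J y * kc J y)))"
      using insert.hyps by (simp add: Wt_upd kc_upd sum_distrib_left sum_distrib_right sum.distrib algebra_simps)
    also have "\<dots> = card (insert a J) * p"
      using insert.hyps by (simp add: m0 m1 sum_bool qw_def algebra_simps) (metis m1c mult.commute)
    finally show ?case unfolding e . }
  { case 3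
    have "(\<Sum>t\<in>UNIV. \<Sum>y\<in>?X. Wt p (insert a J) (y(a := t)) * (kc (insert a J) (y(a := t)))\<^sup>2) =
        (\<Sum>t\<in>UNIV. qw p t * ((if t then 1 else 0) * (\<Sum>y\<in>?X. Wt p J y) + 2 * (if t then 1 else 0) * (\<Sum>y\<in>?X. Wt p J y * kc J y)
           + (\<Sum>y\<in>?X. Wt p J y * (kc J y)\<^sup>2)))"
      using insert.hyps by (simp add: Wt_upd kc_upd sum_distrib_left sum_distrib_right sum.distrib algebra_simps power2_eq_square if_sq)
    also have "\<dots> = real (card (insert a J)) * p + real (card (insert a J)) * (real (card (insert a J)) - 1) * p\<^sup>2"
      using insert.hyps by (simp add: m0 m1 m2 m1c m2c sum_bool qw_def algebra_simps power2_eq_square)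
    finally show ?case unfolding e . }
qed

lemma variance:
  fixes p :: real
  assumes "finite J"
  shows "(\<Sum>y\<in>(\<Pi>\<^sub>E l\<in>J. (UNIV::bool set)). Wt p J y * (kc J y - card J * p)\<^sup>2) = card J * p * (1 - p)"
proof -
  have "(\<Sum>y\<in>(\<Pi>\<^sub>E l\<in>J. (UNIV::bool set)). Wt p J y * (kc J y - card J * p)\<^sup>2) =
    (\<Sum>y\<in>(\<Pi>\<^sub>E l\<in>J. (UNIV::bool set)). Wt p J y * (kc J y)\<^sup>2) - 2 * (card J * p) * (\<Sum>y\<in>(\<Pi>\<^sub>E l\<in>J. (UNIV::bool set)). Wt p J y * kc J y)
     + (card J * p)\<^sup>2 * (\<Sum>y\<in>(\<Pi>\<^sub>E l\<in>J. (UNIV::bool set)). Wt p J y)"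
    by (simp add: power2_eq_square algebra_simps sum.distrib sum_subtractf sum_distrib_left sum_distrib_right)
  also have "\<dots> = (real (card J) * p + real (card J) * (real (card J) - 1) * p\<^sup>2) - 2 * (card J * p) * (card J * p) + (card J * p)\<^sup>2 * 1"
    by (simp only: moments[OF assms])
  also have "\<dots> = card J * p * (1 - p)"
    by (simp add: power2_eq_square algebra_simps)
  finally show ?thesis .
qed


definition blk :: "nat \<Rightarrow> nat \<Rightarrow> nat set" where "blk B b = {(b-1)*B+1..b*B}"

lemma blk_sub: "b \<in> {1..N} \<Longrightarrow> blk B b \<subseteq> {1..N*B}"
  unfolding blk_def using mult_le_mono1[of b N B] by auto

lemma blocks_factor:
  fixes h :: "nat \<Rightarrow> (nat \<Rightarrow> bool) \<Rightarrow> real"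
  assumes hc: "\<And>b x y. (\<And>l. l \<in> blk B b \<Longrightarrow> x l = y l) \<Longrightarrow> h b x = h b y"
  shows "(\<Sum>x\<in>(\<Pi>\<^sub>E l\<in>{1..N*B}. (UNIV::bool set)). Wt p {1..N*B} x * (\<Prod>b\<in>{1..N}. h b x)) =
    (\<Prod>b\<in>{1..N}. \<Sum>y\<in>(\<Pi>\<^sub>E l\<in>blk B b. (UNIV::bool set)). Wt p (blk B b) y * h b y)"
proof (induction N)
  case 0
  then show ?case by (simp add: Wt_def)
next
  case (Suc N)
  let ?A = "{1..N*B}" and ?C = "blk B (Suc N)"
  have AC: "?A \<inter> ?C = {}" unfolding blk_def by auto
  have U: "{1..Suc N * B} = ?A \<union> ?C" unfolding blk_def by auto
  let ?m = "\<lambda>a c l. if l \<in> ?A then a l else c l"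
  have W: "Wt p (?A \<union> ?C) (?m a c) = Wt p ?A a * Wt p ?C c" for a c
  proof -
    have "Wt p (?A \<union> ?C) (?m a c) = Wt p ?A (?m a c) * Wt p ?C (?m a c)"
      unfolding Wt_def by (rule prod.union_disjoint) (auto simp: blk_def)
    also have "Wt p ?A (?m a c) = Wt p ?A a" unfolding Wt_def by (intro prod.cong) auto
    also have "Wt p ?C (?m a c) = Wt p ?C c" unfolding Wt_def using AC by (intro prod.cong) auto
    finally show ?thesis .
  qed
  have Hm: "(\<Prod>b\<in>{1..Suc N}. h b (?m a c)) = (\<Prod>b\<in>{1..N}. h b a) * h (Suc N) c" for a c
  proof -
    have "(\<Prod>b\<in>{1..N}. h b (?m a c)) = (\<Prod>b\<in>{1..N}. h b a)"
    proof (rule prod.cong[OF refl])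
      fix b assume "b \<in> {1..N}"
      then have "blk B b \<subseteq> ?A" by (rule blk_sub)
      then show "h b (?m a c) = h b a" by (intro hc) auto
    qed
    moreover have "h (Suc N) (?m a c) = h (Suc N) c" using AC by (intro hc) auto
    ultimately show ?thesis by (simp add: atLeastAtMostSuc_conv)
  qed
  have "(\<Sum>x\<in>(\<Pi>\<^sub>E l\<in>{1..Suc N*B}. (UNIV::bool set)). Wt p {1..Suc N*B} x * (\<Prod>b\<in>{1..Suc N}. h b x)) =
     (\<Sum>a\<in>(\<Pi>\<^sub>E l\<in>?A. (UNIV::bool set)). \<Sum>c\<in>(\<Pi>\<^sub>E l\<in>?C. (UNIV::bool set)).
        Wt p (?A \<union> ?C) (?m a c) * (\<Prod>b\<in>{1..Suc N}. h b (?m a c)))"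
    unfolding U by (rule sum_PiE_union[OF AC])
  also have "\<dots> = (\<Sum>a\<in>(\<Pi>\<^sub>E l\<in>?A. (UNIV::bool set)). \<Sum>c\<in>(\<Pi>\<^sub>E l\<in>?C. (UNIV::bool set)).
        (Wt p ?A a * (\<Prod>b\<in>{1..N}. h b a)) * (Wt p ?C c * h (Suc N) c))"
    unfolding W Hm by (simp add: mult_ac)
  also have "\<dots> = (\<Sum>a\<in>(\<Pi>\<^sub>E l\<in>?A. (UNIV::bool set)). Wt p ?A a * (\<Prod>b\<in>{1..N}. h b a)) *
      (\<Sum>c\<in>(\<Pi>\<^sub>E l\<in>?C. (UNIV::bool set)). Wt p ?C c * h (Suc N) c)"
    by (simp add: sum_product)
  also have "\<dots> = (\<Prod>b\<in>{1..Suc N}. \<Sum>y\<in>(\<Pi>\<^sub>E l\<in>blk B b. (UNIV::bool set)). Wt p (blk B b) y * h b y)"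
    unfolding Suc.IH by (simp add: atLeastAtMostSuc_conv)
  finally show ?case .
qed

lemma median_count:
  fixes xs :: "real list"
  assumes ne: "xs \<noteq> []" and med: "\<bar>median xs - c\<bar> \<ge> e"
  shows "length xs \<le> 2 * length (filter (\<lambda>y. \<bar>y - c\<bar> \<ge> e) xs)"
proof -
  define ys where "ys = sort xs"
  define m where "m = length xs"
  have sy: "sorted ys" and ly: "length ys = m" unfolding ys_def m_def by simp_all
  have m0: "m > 0" using ne unfolding m_def by simp
  let ?P = "\<lambda>y. \<bar>y - c\<bar> \<ge> e"
  have cnt: "length (filter ?P xs) = card {i. i < m \<and> ?P (ys ! i)}"
  proof -
    have "length (filter ?P xs) = length (filter ?P ys)" unfolding ys_def filter_sort by simp
    then show ?thesis unfolding length_filter_conv_card ly .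
  qed
  have medd: "median xs = (if odd m then ys ! (m div 2) else (ys ! (m div 2 - 1) + ys ! (m div 2)) / 2)"
    unfolding median_def ys_def m_def Let_def ..
  have mono: "ys ! i \<le> ys ! j" if "i \<le> j" "j < m" for i j
    using sorted_nth_mono[OF sy that(1)] that(2) ly by simp
  have k: "median xs \<le> ys ! (m div 2)"
  proof (cases "odd m")
    case True then show ?thesis by (simp add: medd)
  next
    case False
    then have "m div 2 - 1 \<le> m div 2" "m div 2 < m" using m0 by auto
    then show ?thesis using False mono by (simp add: medd)
  qed
  have j: "ys ! ((m - 1) div 2) \<le> median xs"
  proof (cases "odd m")
    case True
    then have "(m - 1) div 2 = m div 2" by presburger
    then show ?thesis using True by (simp add: medd)
  next
    case False
    then have e1: "(m - 1) div 2 = m div 2 - 1" using m0 by presburger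
    have "m div 2 - 1 \<le> m div 2" "m div 2 < m" using m0 by auto
    then show ?thesis using False mono[of "m div 2 - 1" "m div 2"] unfolding e1 by (simp add: medd)
  qed
  from med have "median xs - c \<ge> e \<or> c - median xs \<ge> e" by linarith
  then show ?thesis
  proof
    assume A: "median xs - c \<ge> e"
    have "{m div 2..<m} \<subseteq> {i. i < m \<and> ?P (ys ! i)}"
    proof
      fix i assume "i \<in> {m div 2..<m}"
      then have "ys ! (m div 2) \<le> ys ! i" "i < m" using mono by auto
      then show "i \<in> {i. i < m \<and> ?P (ys ! i)}" using A k by auto
    qed
    then have "card {m div 2..<m} \<le> card {i. i < m \<and> ?P (ys ! i)}" by (intro card_mono) auto
    then show ?thesis unfolding cnt m_def[symmetric] by simp
  next
    assume B: "c - median xs \<ge> e"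
    have "{0..(m - 1) div 2} \<subseteq> {i. i < m \<and> ?P (ys ! i)}"
    proof
      fix i assume i: "i \<in> {0..(m - 1) div 2}"
      then have "i < m" using m0 by auto
      have "(m - 1) div 2 < m" using m0 by auto
      then have "ys ! i \<le> ys ! ((m - 1) div 2)" using mono i by auto
      then show "i \<in> {i. i < m \<and> ?P (ys ! i)}" using B j \<open>i < m\<close> by auto
    qed
    then have "card {0..(m - 1) div 2} \<le> card {i. i < m \<and> ?P (ys ! i)}" by (intro card_mono) auto
    then show ?thesis unfolding cnt m_def[symmetric] by simp
  qed
qed


definition Gx :: "nat \<Rightarrow> nat \<Rightarrow> nat \<Rightarrow> real \<Rightarrow> real \<Rightarrow> (nat \<Rightarrow> bool) \<Rightarrow> real" where
  "Gx s B NB C eps x = (if \<bar>median (map (\<lambda>b. 1 - (3/2) ^ s * (1 / real B) *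
       (\<Sum>l\<in>{(b-1)*B+1..b*B}. if x l then 1 else 0)) [1..<NB+1]) - C\<bar> \<ge> eps then 1 else 0)"

definition Yb :: "nat \<Rightarrow> nat \<Rightarrow> (nat \<Rightarrow> bool) \<Rightarrow> nat \<Rightarrow> real" where
  "Yb s B x b = 1 - (3/2) ^ s * (1 / real B) * kc (blk B b) x"

lemma two_val_prod:
  assumes "finite A" "1 \<le> (a::real)" and "card A \<le> 2 * card {b\<in>A. Q b}"
  shows "1 \<le> (\<Prod>b\<in>A. if Q b then a else 1 / a)"
proof -
  let ?c = "card {b\<in>A. Q b}"
  have "(\<Prod>b\<in>A. if Q b then a else 1 / a) = a ^ card (A \<inter> {b. Q b}) * (1 / a) ^ card (A \<inter> - {b. Q b})"
    using assms(1) by (simp add: prod.If_cases)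
  also have "A \<inter> {b. Q b} = {b\<in>A. Q b}" by auto
  also have "card (A \<inter> - {b. Q b}) = card A - ?c"
    using card_Int_Diff[OF assms(1), of "{b. Q b}"] by (simp add: Diff_eq Int_def)
  finally have e: "(\<Prod>b\<in>A. if Q b then a else 1 / a) = a ^ ?c / a ^ (card A - ?c)"
    by (simp add: power_one_over)
  have "a ^ (card A - ?c) \<le> a ^ ?c" using assms(2,3) by (intro power_increasing) auto
  moreover have "0 < a ^ (card A - ?c)" using assms(2) by simp
  ultimately show ?thesis unfolding e by simp
qed

lemma Gx_le:
  assumes NB: "NB \<ge> 1"
  shows "Gx s B NB C eps x \<le> (\<Prod>b\<in>{1..NB}. if \<bar>Yb s B x b - C\<bar> \<ge> eps then sqrt 3 else 1 / sqrt 3)"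
proof (cases "\<bar>median (map (Yb s B x) [1..<NB+1]) - C\<bar> \<ge> eps")
  case True
  have Geq: "Gx s B NB C eps x = 1"
    using True unfolding Gx_def Yb_def kc_def blk_def by simp
  let ?xs = "map (Yb s B x) [1..<NB+1]"
  have "length ?xs \<le> 2 * length (filter (\<lambda>y. \<bar>y - C\<bar> \<ge> eps) ?xs)"
    by (rule median_count[OF _ True]) (use NB in simp)
  also have "length (filter (\<lambda>y. \<bar>y - C\<bar> \<ge> eps) ?xs) = card {b\<in>{1..NB}. \<bar>Yb s B x b - C\<bar> \<ge> eps}"
    by (simp add: filter_map distinct_length_filter atLeastLessThanSuc_atLeastAtMost Int_def conj_commute) (intro arg_cong[where f=card], auto)
  finally have c: "card {1..NB} \<le> 2 * card {b\<in>{1..NB}. \<bar>Yb s B x b - C\<bar> \<ge> eps}" by (simp del: upt_Suc)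
  show ?thesis unfolding Geq by (rule two_val_prod[OF _ _ c]) simp_all
next
  case False
  have Geq: "Gx s B NB C eps x = 0"
    using False unfolding Gx_def Yb_def kc_def blk_def by simp
  show ?thesis unfolding Geq by (intro prod_nonneg) simp
qed


lemma Wt_nonneg: "0 \<le> p \<Longrightarrow> p \<le> 1 \<Longrightarrow> 0 \<le> Wt p J y"
  unfolding Wt_def qw_def by (intro prod_nonneg) auto

lemma card_blk: "b \<ge> 1 \<Longrightarrow> card (blk B b) = B"
proof -
  assume b: "b \<ge> 1"
  then have "b * B = (b - 1) * B + B" by (metis add.commute le_add_diff_inverse mult.commute mult_Suc_right plus_1_eq_Suc)
  then show ?thesis unfolding blk_def by simp
qed

lemma block_bound:
  fixes p C eps :: real
  assumes p0: "0 \<le> p" and p1: "p \<le> 1" and eps: "eps > 0" and B0: "B > 0" and b1: "b \<ge> 1"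
    and hC: "(3/2) ^ s * p = 1 - C" and hp: "((3/2) ^ s)\<^sup>2 * p \<le> (3/2) ^ s"
    and hB: "4 * (3/2) ^ s / eps\<^sup>2 \<le> real B"
  shows "(\<Sum>y\<in>(\<Pi>\<^sub>E l\<in>blk B b. (UNIV::bool set)). Wt p (blk B b) y *
           (if \<bar>Yb s B y b - C\<bar> \<ge> eps then sqrt 3 else 1 / sqrt 3)) \<le> sqrt 3 / 2"
proof -
  let ?J = "blk B b"
  let ?X = "\<Pi>\<^sub>E l\<in>?J. (UNIV::bool set)"
  define a :: real where "a = (3/2) ^ s"
  have a0: "a > 0" unfolding a_def by simp
  have fJ: "finite ?J" unfolding blk_def by simp
  have cJ: "card ?J = B" by (rule card_blk[OF b1])
  let ?F = "\<lambda>y. \<bar>Yb s B y b - C\<bar> \<ge> eps"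
  have hC': "1 - C = a * p" using hC unfolding a_def by simp
  have Yc: "Yb s B y b - C = (a / real B) * (real B * p - kc ?J y)" for y
  proof -
    have "Yb s B y b - C = (1 - C) - a * (1 / real B) * kc ?J y" unfolding Yb_def a_def by simp
    also have "\<dots> = a * p - a * (1 / real B) * kc ?J y" using hC' by simp
    also have "\<dots> = (a / real B) * (real B * p - kc ?J y)" using B0 by (simp add: field_simps)
    finally show ?thesis .
  qed
  have ind: "(if ?F y then 1 else 0) \<le> (a / real B)\<^sup>2 / eps\<^sup>2 * (kc ?J y - real B * p)\<^sup>2" for y
  proof (cases "?F y")
    case True
    then have "eps\<^sup>2 \<le> \<bar>Yb s B y b - C\<bar>\<^sup>2" using eps by (intro power_mono) auto
    also have "\<dots> = (a / real B)\<^sup>2 * (kc ?J y - real B * p)\<^sup>2" unfolding power2_abs Yc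
      by (simp only: power_mult_distrib power2_commute[of "real B * p"])
    finally have le: "eps\<^sup>2 \<le> (a / real B)\<^sup>2 * (kc ?J y - real B * p)\<^sup>2" .
    have "1 \<le> (a / real B)\<^sup>2 * (kc ?J y - real B * p)\<^sup>2 / eps\<^sup>2"
      using le eps by (simp add: le_divide_eq)
    then show ?thesis using True by simp
  qed simp
  have Pr: "(\<Sum>y\<in>?X. Wt p ?J y * (if ?F y then 1 else 0)) \<le> 1/4"
  proof -
    have "(\<Sum>y\<in>?X. Wt p ?J y * (if ?F y then 1 else 0)) \<le>
        (\<Sum>y\<in>?X. Wt p ?J y * ((a / real B)\<^sup>2 / eps\<^sup>2 * (kc ?J y - real B * p)\<^sup>2))"
      by (intro sum_mono mult_left_mono ind Wt_nonneg p0 p1)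
    also have "\<dots> = (a / real B)\<^sup>2 / eps\<^sup>2 * (\<Sum>y\<in>?X. Wt p ?J y * (kc ?J y - real (card ?J) * p)\<^sup>2)"
      by (simp add: sum_distrib_left cJ mult_ac)
    also have "\<dots> = (a / real B)\<^sup>2 / eps\<^sup>2 * (real B * p * (1 - p))"
      using variance[OF fJ, of p] cJ by simp
    also have "\<dots> = (a\<^sup>2 * p) * (1 - p) / (real B * eps\<^sup>2)"
      using B0 eps by (simp add: power2_eq_square field_simps)
    also have "\<dots> \<le> (a\<^sup>2 * p) / (real B * eps\<^sup>2)"
      using p0 p1 a0 B0 eps by (intro divide_right_mono) (auto intro!: mult_left_le)
    also have "\<dots> \<le> a / (real B * eps\<^sup>2)"
      using hp B0 eps unfolding a_def by (intro divide_right_mono) auto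
    also have "\<dots> \<le> 1/4"
      using hB B0 eps unfolding a_def by (simp add: field_simps)
    finally show ?thesis .
  qed
  have d3: "3 / sqrt 3 = sqrt (3::real)" by (rule real_div_sqrt) simp
  have hs: "(if ?F y then sqrt 3 else 1 / sqrt 3) = 1 / sqrt 3 + (2 / sqrt 3) * (if ?F y then 1 else 0)" for y
  proof -
    have "1 / sqrt 3 + 2 / sqrt 3 = 3 / sqrt (3::real)" by (simp add: add_divide_distrib[symmetric])
    then show ?thesis using d3 by simp
  qed
  have "(\<Sum>y\<in>?X. Wt p ?J y * (if ?F y then sqrt 3 else 1 / sqrt 3)) =
      (1 / sqrt 3) * (\<Sum>y\<in>?X. Wt p ?J y) + (2 / sqrt 3) * (\<Sum>y\<in>?X. Wt p ?J y * (if ?F y then 1 else 0))"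
    unfolding hs by (simp add: sum_distrib_left sum.distrib distrib_left mult_ac)
  also have "\<dots> \<le> (1 / sqrt 3) * 1 + (2 / sqrt 3) * (1/4)"
    unfolding moments(1)[OF fJ] by (intro add_left_mono mult_left_mono Pr) simp
  also have "\<dots> = (3 / sqrt 3) / 2"
    by (simp add: field_simps)
  also have "\<dots> = sqrt 3 / 2" using d3 by simp
  finally show ?thesis .
qed

theorem disc_main:
  fixes p C eps :: real
  assumes p0: "0 \<le> p" and p1: "p \<le> 1" and eps: "eps > 0" and B0: "B > 0" and NB: "NB \<ge> 1"
    and hC: "(3/2) ^ s * p = 1 - C" and hp: "((3/2) ^ s)\<^sup>2 * p \<le> (3/2) ^ s"
    and hB: "4 * (3/2) ^ s / eps\<^sup>2 \<le> real B"
  shows "(\<Sum>x\<in>(\<Pi>\<^sub>E l\<in>{1..NB*B}. (UNIV::bool set)). Gx s B NB C eps x * Wt p {1..NB*B} x) \<le> (sqrt 3 / 2) ^ NB"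
proof -
  let ?h = "\<lambda>b x. if \<bar>Yb s B x b - C\<bar> \<ge> eps then sqrt 3 else 1 / sqrt 3"
  have "(\<Sum>x\<in>(\<Pi>\<^sub>E l\<in>{1..NB*B}. (UNIV::bool set)). Gx s B NB C eps x * Wt p {1..NB*B} x) \<le>
      (\<Sum>x\<in>(\<Pi>\<^sub>E l\<in>{1..NB*B}. (UNIV::bool set)). Wt p {1..NB*B} x * (\<Prod>b\<in>{1..NB}. ?h b x))"
  proof (intro sum_mono)
    fix x
    show "Gx s B NB C eps x * Wt p {1..NB*B} x \<le> Wt p {1..NB*B} x * (\<Prod>b\<in>{1..NB}. ?h b x)"
      using mult_right_mono[OF Gx_le[OF NB, of s B C eps x] Wt_nonneg[OF p0 p1, of "{1..NB*B}" x]]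
      by (simp add: mult.commute)
  qed
  also have "\<dots> = (\<Prod>b\<in>{1..NB}. \<Sum>y\<in>(\<Pi>\<^sub>E l\<in>blk B b. (UNIV::bool set)). Wt p (blk B b) y * ?h b y)"
  proof (rule blocks_factor)
    fix b x y assume "\<And>l. l \<in> blk B b \<Longrightarrow> x l = (y l :: bool)"
    then have "kc (blk B b) x = kc (blk B b) y" unfolding kc_def by (intro sum.cong) auto
    then show "?h b x = ?h b y" unfolding Yb_def by simp
  qed
  also have "\<dots> \<le> (\<Prod>b\<in>{1..NB}. sqrt 3 / 2)"
    by (intro prod_mono conjI sum_nonneg mult_nonneg_nonneg Wt_nonneg p0 p1 block_bound[OF p0 p1 eps B0 _ hC hp hB]) auto
  also have "\<dots> = (sqrt 3 / 2) ^ NB" by simp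
  finally show ?thesis .
qed



lemma meas_norm: "f \<in> borel_measurable M \<Longrightarrow> (\<lambda>x. norm (f x :: complex)) \<in> borel_measurable M"
  by measurable

lemma meas_coord:
  fixes f :: "mat2 \<Rightarrow> 'b::topological_space" and H :: "mat2 measure"
  assumes "sets H = sets borel" "k \<in> K" "continuous_on UNIV f"
  shows "(\<lambda>U. f (U k)) \<in> borel_measurable (Pi\<^sub>M K (\<lambda>_. H))"
proof -
  have "(\<lambda>U. U k) \<in> Pi\<^sub>M K (\<lambda>_. H) \<rightarrow>\<^sub>M H" using assms(2) by (rule measurable_component_singleton)
  then have "(\<lambda>U. U k) \<in> Pi\<^sub>M K (\<lambda>_. H) \<rightarrow>\<^sub>M borel" using measurable_cong_sets[OF refl assms(1)] by blast
  then show ?thesis by (rule borel_measurable_continuous_on[OF assms(3)])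
qed

lemma meas_entry:
  fixes H :: "mat2 measure"
  assumes "sets H = sets borel" "k \<in> K"
  shows "(\<lambda>U. U k $ a $ b) \<in> borel_measurable (Pi\<^sub>M K (\<lambda>_. H))"
  by (rule meas_coord[OF assms, of "\<lambda>A. A $ a $ b"]) (intro continuous_intros)

lemma meas_op:
  fixes H :: "mat2 measure"
  assumes "sets H = sets borel" "{l} \<times> S \<subseteq> K"
  shows "(\<lambda>U. outcome_prob n S (\<lambda>i. U (l, i)) psi z) \<in> borel_measurable (Pi\<^sub>M K (\<lambda>_. H))"
  unfolding outcome_prob_def apply_local_def
  apply (intro borel_measurable_sum borel_measurable_power meas_norm borel_measurable_times borel_measurable_prod
    borel_measurable_const)
  using assms by (auto intro!: meas_entry)

definition rr :: "nat \<Rightarrow> nat set \<Rightarrow> (nat set \<Rightarrow> complex) \<Rightarrow> (nat \<Rightarrow> mat2) \<Rightarrow> bool \<Rightarrow> real" where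
  "rr n S psi u t = (if t then (\<Sum>z\<in>Pow S. (outcome_prob n S u psi z)\<^sup>2)
     else (\<Sum>z\<in>Pow S. \<Sum>z'\<in>Pow S. if z = z' then 0 else outcome_prob n S u psi z * outcome_prob n S u psi z'))"

lemma outcome_prob_nonneg: "outcome_prob n S u psi z \<ge> 0"
  unfolding outcome_prob_def by (intro sum_nonneg) simp

lemma rr_nonneg: "rr n S psi u t \<ge> 0"
  unfolding rr_def by (auto intro!: sum_nonneg mult_nonneg_nonneg outcome_prob_nonneg)

lemma outcome_prob_cong: "(\<And>i. i \<in> S \<Longrightarrow> u i = u' i) \<Longrightarrow> outcome_prob n S u psi z = outcome_prob n S u' psi z"
  unfolding outcome_prob_def apply_local_def by (intro sum.cong refl arg_cong[where f="\<lambda>x. (cmod x)\<^sup>2"] arg_cong2[where f="(*)"] prod.cong) auto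

lemma rr_cong: assumes "\<And>i. i \<in> S \<Longrightarrow> u i = u' i" shows "rr n S psi u t = rr n S psi u' t"
proof -
  have e: "\<And>z. outcome_prob n S u psi z = outcome_prob n S u' psi z"
    by (rule outcome_prob_cong) (rule assms)
  show ?thesis unfolding rr_def e ..
qed

lemma if_const_meas: "(c \<Longrightarrow> f \<in> borel_measurable M) \<Longrightarrow> (\<not> c \<Longrightarrow> g \<in> borel_measurable M) \<Longrightarrow>
  (\<lambda>x. if c then f x else g x :: real) \<in> borel_measurable M"
  by (cases c) simp_all

lemma rr_meas:
  fixes H :: "mat2 measure"
  assumes "sets H = sets borel" "{l} \<times> S \<subseteq> K"
  shows "(\<lambda>U. rr n S psi (\<lambda>i. U (l, i)) t) \<in> borel_measurable (Pi\<^sub>M K (\<lambda>_. H))"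
  unfolding rr_def
  by (cases t) (auto intro!: borel_measurable_sum borel_measurable_power borel_measurable_times meas_op[OF assms] if_const_meas)

lemma rr_False:
  assumes fS: "finite S"
  shows "rr n S psi u False = (\<Sum>z\<in>Pow S. outcome_prob n S u psi z)\<^sup>2 - rr n S psi u True"
proof -
  have "(\<Sum>z\<in>Pow S. outcome_prob n S u psi z)\<^sup>2 = (\<Sum>z\<in>Pow S. \<Sum>z'\<in>Pow S. outcome_prob n S u psi z * outcome_prob n S u psi z')"
    by (simp add: power2_eq_square sum_product)
  also have "\<dots> = (\<Sum>z\<in>Pow S. \<Sum>z'\<in>Pow S. (if z = z' then 0 else outcome_prob n S u psi z * outcome_prob n S u psi z') +
       (if z = z' then outcome_prob n S u psi z * outcome_prob n S u psi z' else 0))"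
    by (intro sum.cong refl) simp
  also have "\<dots> = rr n S psi u False + rr n S psi u True"
    unfolding rr_def using fS by (simp add: sum.distrib power2_eq_square)
  finally show ?thesis by simp
qed

context
  fixes H :: "mat2 measure"
  assumes haar: "haar_U2 H"
begin

lemma nn_prod_blocks:
  fixes F :: "nat \<Rightarrow> (nat \<Rightarrow> mat2) \<Rightarrow> real" and S :: "nat set"
  assumes fS: "finite S"
    and cong: "\<And>l u u'. (\<And>i. i \<in> S \<Longrightarrow> u i = u' i) \<Longrightarrow> F l u = F l u'"
    and meas: "\<And>l K. {l} \<times> S \<subseteq> K \<Longrightarrow> (\<lambda>U. F l (\<lambda>i. U (l, i))) \<in> borel_measurable (Pi\<^sub>M K (\<lambda>_. H))"
  shows "(\<integral>\<^sup>+U. (\<Prod>l\<in>{1..L}. ennreal (F l (\<lambda>i. U (l, i)))) \<partial>Pi\<^sub>M ({1..L} \<times> S) (\<lambda>_. H)) =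
    (\<Prod>l\<in>{1..L}. \<integral>\<^sup>+U. ennreal (F l (\<lambda>i. U (l, i))) \<partial>Pi\<^sub>M ({l} \<times> S) (\<lambda>_. H))"
proof (induction L)
  case 0
  have "prob_space (Pi\<^sub>M {} (\<lambda>_. H))" by (rule prob_space_PiM) (rule H_prob[OF haar])
  then have "emeasure (Pi\<^sub>M {} (\<lambda>_. H)) (space (Pi\<^sub>M {} (\<lambda>_. H))) = 1"
    by (rule prob_space.emeasure_space_1)
  then show ?case by simp
next
  case (Suc L)
  interpret product_sigma_finite "\<lambda>_. H" by (rule PS[OF haar])
  let ?I = "{1..L} \<times> S" and ?J = "{Suc L} \<times> S"
  have IJ: "?I \<inter> ?J = {}" by auto
  have U: "{1..Suc L} \<times> S = ?I \<union> ?J" by (auto simp: le_Suc_eq)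
  let ?A = "\<lambda>U. \<Prod>l\<in>{1..L}. ennreal (F l (\<lambda>i. U (l, i)))"
  let ?B = "\<lambda>U. ennreal (F (Suc L) (\<lambda>i. U (Suc L, i)))"
  have mA: "?A \<in> borel_measurable (Pi\<^sub>M ?I (\<lambda>_. H))"
    by (intro borel_measurable_prod_ennreal measurable_compose[OF meas measurable_ennreal]) auto
  have mB: "?B \<in> borel_measurable (Pi\<^sub>M ?J (\<lambda>_. H))"
    by (intro measurable_compose[OF meas measurable_ennreal]) auto
  have "(\<Prod>l\<in>{1..Suc L}. ennreal (F l (\<lambda>i. U (l, i)))) = ?A U * ?B U" for U
    by (simp add: atLeastAtMostSuc_conv mult.commute)
  then have "(\<integral>\<^sup>+U. (\<Prod>l\<in>{1..Suc L}. ennreal (F l (\<lambda>i. U (l, i)))) \<partial>Pi\<^sub>M ({1..Suc L} \<times> S) (\<lambda>_. H)) =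
      (\<integral>\<^sup>+U. ?A U * ?B U \<partial>Pi\<^sub>M (?I \<union> ?J) (\<lambda>_. H))"
    unfolding U by simp
  also have "\<dots> = (\<integral>\<^sup>+x. \<integral>\<^sup>+y. ?A (merge ?I ?J (x, y)) * ?B (merge ?I ?J (x, y)) \<partial>Pi\<^sub>M ?J (\<lambda>_. H) \<partial>Pi\<^sub>M ?I (\<lambda>_. H))"
    by (rule product_nn_integral_fold[OF IJ]) (auto simp: fS intro!: borel_measurable_times_ennreal borel_measurable_prod_ennreal measurable_compose[OF meas measurable_ennreal])
  also have "\<dots> = (\<integral>\<^sup>+x. \<integral>\<^sup>+y. ?A x * ?B y \<partial>Pi\<^sub>M ?J (\<lambda>_. H) \<partial>Pi\<^sub>M ?I (\<lambda>_. H))"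
  proof (intro nn_integral_cong)
    fix x y
    have a: "F l (\<lambda>i. merge ?I ?J (x, y) (l, i)) = F l (\<lambda>i. x (l, i))" if "l \<in> {1..L}" for l
      using that IJ by (intro cong) simp
    have b: "F (Suc L) (\<lambda>i. merge ?I ?J (x, y) (Suc L, i)) = F (Suc L) (\<lambda>i. y (Suc L, i))"
      using IJ by (intro cong) simp
    show "?A (merge ?I ?J (x, y)) * ?B (merge ?I ?J (x, y)) = ?A x * ?B y"
    proof -
      have "?A (merge ?I ?J (x, y)) = ?A x"
      proof (rule prod.cong[OF refl])
        fix l assume "l \<in> {1..L}"
        then show "ennreal (F l (\<lambda>i. merge ?I ?J (x, y) (l, i))) = ennreal (F l (\<lambda>i. x (l, i)))"
          using a by presburger
      qed
      then show ?thesis using b by simp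
    qed
  qed
  also have "\<dots> = (\<integral>\<^sup>+x. ?A x * (\<integral>\<^sup>+y. ?B y \<partial>Pi\<^sub>M ?J (\<lambda>_. H)) \<partial>Pi\<^sub>M ?I (\<lambda>_. H))"
    by (intro nn_integral_cong nn_integral_cmult mB)
  also have "\<dots> = (\<integral>\<^sup>+x. ?A x \<partial>Pi\<^sub>M ?I (\<lambda>_. H)) * (\<integral>\<^sup>+y. ?B y \<partial>Pi\<^sub>M ?J (\<lambda>_. H))"
    by (rule nn_integral_multc[OF mA])
  also have "\<dots> = (\<Prod>l\<in>{1..Suc L}. \<integral>\<^sup>+U. ennreal (F l (\<lambda>i. U (l, i))) \<partial>Pi\<^sub>M ({l} \<times> S) (\<lambda>_. H))"
    unfolding Suc.IH by (simp add: atLeastAtMostSuc_conv mult.commute)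
  finally show ?case .
qed


lemma AE_block_U2:
  assumes fS: "finite S" and that: "{l} \<times> S \<subseteq> K"
  shows "AE U in Pi\<^sub>M K (\<lambda>_. H). \<forall>i\<in>S. U (l, i) \<in> U2"
proof -
  have "\<forall>i\<in>S. AE U in Pi\<^sub>M K (\<lambda>_. H). U (l, i) \<in> U2"
    using that by (auto intro!: AE_PiM_component H_prob[OF haar] H_AE_U2[OF haar])
  then show ?thesis using fS by (simp add: eventually_ball_finite)
qed

lemma block_vals:
  fixes l :: nat
  assumes S: "S \<subseteq> qubits n" and pure: "is_pure_state n psi"
  defines "p \<equiv> (1/3) ^ card S * (\<Sum>\<alpha>\<in>Pow S. purity n psi \<alpha>)"
  shows "(\<integral>\<^sup>+U. ennreal (rr n S psi (\<lambda>i. U (l, i)) True) \<partial>Pi\<^sub>M ({l} \<times> S) (\<lambda>_. H)) = ennreal p"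
    and "(\<integral>\<^sup>+U. ennreal (rr n S psi (\<lambda>i. U (l, i)) False) \<partial>Pi\<^sub>M ({l} \<times> S) (\<lambda>_. H)) = ennreal (1 - p)"
    and "0 \<le> p" and "p \<le> 1"
proof -
  let ?M = "Pi\<^sub>M ({l} \<times> S) (\<lambda>_. H)"
  interpret M: prob_space ?M by (intro prob_space_PiM H_prob[OF haar])
  have fS: "finite S" using S by (rule finite_subset) simp
  let ?f = "\<lambda>U. rr n S psi (\<lambda>i. U (l, i)) True"
  have fe: "?f = (\<lambda>U. \<Sum>z\<in>Pow S. (outcome_prob n S (\<lambda>i. U (l, i)) psi z)\<^sup>2)"
    unfolding rr_def by simp
  have int: "integrable ?M ?f" unfolding fe by (rule block_expect(1)[OF haar S pure])
  have ival: "integral\<^sup>L ?M ?f = p" unfolding fe p_def by (rule block_expect(2)[OF haar S pure])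
  have pw: "rr n S psi (\<lambda>i. U (l, i)) False = 1 - ?f U" if "\<forall>i\<in>S. U (l, i) \<in> U2" for U
  proof -
    have "(\<Sum>z\<in>Pow S. outcome_prob n S (\<lambda>i. U (l, i)) psi z) = 1"
      using that by (intro op_total[OF S pure]) auto
    then show ?thesis by (simp add: rr_False[OF fS])
  qed
  have AE1: "AE U in ?M. rr n S psi (\<lambda>i. U (l, i)) False = 1 - ?f U"
    using AE_block_U2[OF fS order_refl, of l] by (rule eventually_mono) (rule pw)
  have int2: "integrable ?M (\<lambda>U. 1 - ?f U)" using int by simp
  have nn2: "AE U in ?M. 0 \<le> 1 - ?f U"
    using AE1 by (rule eventually_mono) (metis rr_nonneg)
  show "(\<integral>\<^sup>+U. ennreal (?f U) \<partial>?M) = ennreal p"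
    using nn_integral_eq_integral[OF int] ival by (simp add: rr_nonneg)
  have "(\<integral>\<^sup>+U. ennreal (rr n S psi (\<lambda>i. U (l, i)) False) \<partial>?M) = (\<integral>\<^sup>+U. ennreal (1 - ?f U) \<partial>?M)"
    using AE1 by (intro nn_integral_cong_AE) (auto elim!: eventually_mono)
  also have "\<dots> = ennreal (integral\<^sup>L ?M (\<lambda>U. 1 - ?f U))"
    by (rule nn_integral_eq_integral[OF int2 nn2])
  also have "integral\<^sup>L ?M (\<lambda>U. 1 - ?f U) = 1 - p"
    using int ival by (simp add: Bochner_Integration.integral_diff M.prob_space)
  finally show "(\<integral>\<^sup>+U. ennreal (rr n S psi (\<lambda>i. U (l, i)) False) \<partial>?M) = ennreal (1 - p)" .
  show "0 \<le> p" unfolding ival[symmetric] by (rule Bochner_Integration.integral_nonneg) (simp add: rr_nonneg)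
  have "0 \<le> integral\<^sup>L ?M (\<lambda>U. 1 - ?f U)" by (rule integral_nonneg_AE[OF nn2])
  then show "p \<le> 1" using int ival by (simp add: Bochner_Integration.integral_diff M.prob_space)
qed

end


lemma g_eq: "(if \<bar>median (map (block_estimate s B Z) [1..<NB+1]) - C\<bar> \<ge> eps then 1 else 0) =
   Gx s B NB C eps (\<lambda>l. Z l 1 = Z l 2)"
  unfolding Gx_def block_estimate_def ..

lemma Gx_cong:
  assumes "\<And>l. l \<in> {1..NB*B} \<Longrightarrow> x l = y l"
  shows "Gx s B NB C eps x = Gx s B NB C eps y"
proof -
  have "map (\<lambda>b. 1 - (3/2) ^ s * (1 / real B) * (\<Sum>l\<in>{(b-1)*B+1..b*B}. if x l then 1 else 0)) [1..<NB+1] =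
        map (\<lambda>b. 1 - (3/2) ^ s * (1 / real B) * (\<Sum>l\<in>{(b-1)*B+1..b*B}. if y l then 1 else 0)) [1..<NB+1]"
  proof (rule map_cong[OF refl])
    fix b assume "b \<in> set [1..<NB+1]"
    then have b: "b \<le> NB" by auto
    have inI: "l \<in> {1..NB*B}" if "l \<in> {(b-1)*B+1..b*B}" for l
      using that le_trans[OF _ mult_le_mono1[OF b, of B]] by auto
    have "(\<Sum>l\<in>{(b-1)*B+1..b*B}. if x l then 1 else 0) = (\<Sum>l\<in>{(b-1)*B+1..b*B}. if y l then (1::real) else 0)"
      by (rule sum.cong[OF refl]) (simp only: assms[OF inI])
    then show "1 - (3/2) ^ s * (1 / real B) * (\<Sum>l\<in>{(b-1)*B+1..b*B}. if x l then 1 else 0) =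
               1 - (3/2) ^ s * (1 / real B) * (\<Sum>l\<in>{(b-1)*B+1..b*B}. if y l then 1 else 0)"
      by simp
  qed
  then show ?thesis unfolding Gx_def by (simp only:)
qed

lemma pair_sum:
  "(\<Sum>t\<in>(\<Pi>\<^sub>E j\<in>{1::nat,2}. Pow S). f (t 1) (t 2)) = (\<Sum>z\<in>Pow S. \<Sum>z'\<in>Pow S. f z z')"
proof -
  have "(\<Sum>t\<in>(\<Pi>\<^sub>E j\<in>{1::nat,2}. Pow S). f (t 1) (t 2)) = (\<Sum>p\<in>Pow S \<times> Pow S. f (fst p) (snd p))"
    by (rule sum.reindex_bij_witness[of _ "\<lambda>p j. if j = 1 then fst p else if j = 2 then snd p else undefined" "\<lambda>t. (t 1, t 2)"])
       (auto simp: PiE_iff extensional_def fun_eq_iff)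
  then show ?thesis by (simp add: sum.cartesian_product case_prod_beta)
qed

lemma D1:
  fixes Pl :: "nat \<Rightarrow> nat set \<Rightarrow> real"
  assumes fS: "finite S"
  shows "(\<Sum>Z\<in>(\<Pi>\<^sub>E l\<in>{1..NB*B}. \<Pi>\<^sub>E j\<in>{1::nat,2}. Pow S).
      (\<Prod>l\<in>{1..NB*B}. Pl l (Z l 1) * Pl l (Z l 2)) * Gx s B NB C eps (\<lambda>l. Z l 1 = Z l 2)) =
    (\<Sum>x\<in>(\<Pi>\<^sub>E l\<in>{1..NB*B}. (UNIV :: bool set)). Gx s B NB C eps x *
       (\<Prod>l\<in>{1..NB*B}. \<Sum>z\<in>Pow S. \<Sum>z'\<in>Pow S. if x l = (z = z') then Pl l z * Pl l z' else 0))"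
proof -
  let ?I = "{1..NB*B}"
  let ?X = "\<Pi>\<^sub>E l\<in>?I. (UNIV :: bool set)"
  let ?T = "\<Pi>\<^sub>E j\<in>{1::nat,2}. Pow S"
  let ?G = "Gx s B NB C eps"
  have fT: "finite ?T" using fS by (simp add: finite_PiE)
  have gsum: "?G f = (\<Sum>x\<in>?X. if (\<forall>l\<in>?I. x l = f l) then ?G x else 0)" for f
  proof -
    have "(\<Sum>x\<in>?X. if (\<forall>l\<in>?I. x l = f l) then ?G x else 0) = (\<Sum>x\<in>?X. if x = restrict f ?I then ?G x else 0)"
    proof (intro sum.cong refl)
      fix x assume x: "x \<in> ?X"
      have "(\<forall>l\<in>?I. x l = f l) \<longleftrightarrow> x = restrict f ?I"
        using x by (auto simp: fun_eq_iff PiE_iff extensional_def restrict_def)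
      then show "(if (\<forall>l\<in>?I. x l = f l) then ?G x else 0) = (if x = restrict f ?I then ?G x else 0)"
        by simp
    qed
    also have "\<dots> = ?G (restrict f ?I)" by (simp add: finite_PiE)
    also have "\<dots> = ?G f" by (rule Gx_cong) simp
    finally show ?thesis by simp
  qed
  have "(\<Sum>Z\<in>(\<Pi>\<^sub>E l\<in>?I. ?T). (\<Prod>l\<in>?I. Pl l (Z l 1) * Pl l (Z l 2)) * ?G (\<lambda>l. Z l 1 = Z l 2)) =
     (\<Sum>Z\<in>(\<Pi>\<^sub>E l\<in>?I. ?T). \<Sum>x\<in>?X. ?G x * (\<Prod>l\<in>?I. if x l = (Z l 1 = Z l 2) then Pl l (Z l 1) * Pl l (Z l 2) else 0))"
  proof (intro sum.cong refl)
    fix Z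
    have "(\<Prod>l\<in>?I. Pl l (Z l 1) * Pl l (Z l 2)) * ?G (\<lambda>l. Z l 1 = Z l 2) =
       (\<Sum>x\<in>?X. (if (\<forall>l\<in>?I. x l = (Z l 1 = Z l 2)) then ?G x * (\<Prod>l\<in>?I. Pl l (Z l 1) * Pl l (Z l 2)) else 0))"
      unfolding gsum[of "\<lambda>l. Z l 1 = Z l 2"] sum_distrib_left by (intro sum.cong refl) simp
    also have "\<dots> = (\<Sum>x\<in>?X. ?G x * (\<Prod>l\<in>?I. if x l = (Z l 1 = Z l 2) then Pl l (Z l 1) * Pl l (Z l 2) else 0))"
      by (intro sum.cong refl) (auto simp: prod_zero)
    finally show "(\<Prod>l\<in>?I. Pl l (Z l 1) * Pl l (Z l 2)) * ?G (\<lambda>l. Z l 1 = Z l 2) =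
       (\<Sum>x\<in>?X. ?G x * (\<Prod>l\<in>?I. if x l = (Z l 1 = Z l 2) then Pl l (Z l 1) * Pl l (Z l 2) else 0))" .
  qed
  also have "\<dots> = (\<Sum>x\<in>?X. ?G x * (\<Sum>Z\<in>(\<Pi>\<^sub>E l\<in>?I. ?T). \<Prod>l\<in>?I. if x l = (Z l 1 = Z l 2) then Pl l (Z l 1) * Pl l (Z l 2) else 0))"
    by (subst sum.swap) (simp add: sum_distrib_left)
  also have "\<dots> = (\<Sum>x\<in>?X. ?G x * (\<Prod>l\<in>?I. \<Sum>t\<in>?T. if x l = (t 1 = t 2) then Pl l (t 1) * Pl l (t 2) else 0))"
    by (intro sum.cong refl arg_cong2[where f="(*)"]) (rule prod_sum_PiE[symmetric], simp_all add: fS finite_PiE)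
  also have "\<dots> = (\<Sum>x\<in>?X. ?G x * (\<Prod>l\<in>?I. \<Sum>z\<in>Pow S. \<Sum>z'\<in>Pow S. if x l = (z = z') then Pl l z * Pl l z' else 0))"
    by (simp only: pair_sum[where f="\<lambda>z z'. if _ = (z = z') then Pl _ z * Pl _ z' else 0"])
  finally show ?thesis .
qed


lemma rr_alt:
  assumes "finite S"
  shows "rr n S psi u t = (\<Sum>z\<in>Pow S. \<Sum>z'\<in>Pow S. if t = (z = z') then outcome_prob n S u psi z * outcome_prob n S u psi z' else 0)"
  using assms by (cases t) (auto simp: rr_def power2_eq_square intro!: sum.cong)

lemma Gx_nonneg: "Gx s B NB C eps x \<ge> 0"
  unfolding Gx_def by simp

lemma failure_prob_eq:
  assumes haar: "haar_U2 H" and S: "S \<subseteq> qubits n" and pure: "is_pure_state n psi"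
  defines "p \<equiv> (1/3) ^ card S * (\<Sum>\<alpha>\<in>Pow S. purity n psi \<alpha>)"
  shows "failure_prob H n psi S eps NB B = ennreal (\<Sum>x\<in>(\<Pi>\<^sub>E l\<in>{1..NB*B}. (UNIV :: bool set)).
      Gx (card S) B NB (conc_ent n psi S) eps x * (\<Prod>l\<in>{1..NB*B}. if x l then p else 1 - p))"
proof -
  have fS: "finite S" using S by (rule finite_subset) simp
  let ?I = "{1..NB*B}"
  let ?X = "\<Pi>\<^sub>E l\<in>?I. (UNIV :: bool set)"
  let ?G = "Gx (card S) B NB (conc_ent n psi S) eps"
  let ?M = "Pi\<^sub>M (?I \<times> S) (\<lambda>_. H)"
  have p01: "0 \<le> p" "p \<le> 1" using block_vals(3,4)[OF haar S pure] unfolding p_def by auto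
  have hs: "sets H = sets borel" by (rule H_sets[OF haar])
  have inner: "(\<Sum>Z\<in>(\<Pi>\<^sub>E l\<in>?I. \<Pi>\<^sub>E j\<in>{1::nat,2}. Pow S).
      (\<Prod>l\<in>?I. outcome_prob n S (\<lambda>i. U (l, i)) psi (Z l 1) * outcome_prob n S (\<lambda>i. U (l, i)) psi (Z l 2)) *
      (if \<bar>median (map (block_estimate (card S) B Z) [1..<NB+1]) - conc_ent n psi S\<bar> \<ge> eps then 1 else 0))
    = (\<Sum>x\<in>?X. ?G x * (\<Prod>l\<in>?I. rr n S psi (\<lambda>i. U (l, i)) (x l)))" for U
    unfolding g_eq rr_alt[OF fS] by (rule D1[OF fS, where Pl="\<lambda>l z. outcome_prob n S (\<lambda>i. U (l, i)) psi z"])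
  have "failure_prob H n psi S eps NB B = (\<integral>\<^sup>+U. ennreal (\<Sum>x\<in>?X. ?G x * (\<Prod>l\<in>?I. rr n S psi (\<lambda>i. U (l, i)) (x l))) \<partial>?M)"
    unfolding failure_prob_def Let_def inner ..
  also have "\<dots> = (\<integral>\<^sup>+U. (\<Sum>x\<in>?X. ennreal (?G x) * (\<Prod>l\<in>?I. ennreal (rr n S psi (\<lambda>i. U (l, i)) (x l)))) \<partial>?M)"
    by (intro nn_integral_cong)
       (simp add: sum_ennreal[symmetric] Gx_nonneg rr_nonneg prod_nonneg ennreal_mult prod_ennreal)
  also have "\<dots> = (\<Sum>x\<in>?X. ennreal (?G x) * (\<integral>\<^sup>+U. (\<Prod>l\<in>?I. ennreal (rr n S psi (\<lambda>i. U (l, i)) (x l))) \<partial>?M))"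
    apply (subst nn_integral_sum)
     apply (auto intro!: borel_measurable_times_ennreal borel_measurable_prod_ennreal measurable_compose[OF rr_meas[OF hs] measurable_ennreal])[1]
    apply (rule sum.cong[OF refl])
    apply (rule nn_integral_cmult)
    apply (auto intro!: borel_measurable_prod_ennreal measurable_compose[OF rr_meas[OF hs] measurable_ennreal])
    done
  also have "\<dots> = (\<Sum>x\<in>?X. ennreal (?G x) * (\<Prod>l\<in>?I. \<integral>\<^sup>+U. ennreal (rr n S psi (\<lambda>i. U (l, i)) (x l)) \<partial>Pi\<^sub>M ({l} \<times> S) (\<lambda>_. H)))"
  proof (intro sum.cong refl arg_cong2[where f="(*)"])
    fix x
    show "(\<integral>\<^sup>+U. (\<Prod>l\<in>?I. ennreal (rr n S psi (\<lambda>i. U (l, i)) (x l))) \<partial>?M) =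
      (\<Prod>l\<in>?I. \<integral>\<^sup>+U. ennreal (rr n S psi (\<lambda>i. U (l, i)) (x l)) \<partial>Pi\<^sub>M ({l} \<times> S) (\<lambda>_. H))"
      by (rule nn_prod_blocks[OF haar fS, where F="\<lambda>l u. rr n S psi u (x l)"])
         (auto intro: rr_cong rr_meas[OF hs])
  qed
  also have "\<dots> = (\<Sum>x\<in>?X. ennreal (?G x) * (\<Prod>l\<in>?I. ennreal (if x l then p else 1 - p)))"
    by (intro sum.cong refl arg_cong2[where f="(*)"] prod.cong)
       (auto simp: block_vals(1,2)[OF haar S pure] p_def)
  also have "\<dots> = ennreal (\<Sum>x\<in>?X. ?G x * (\<Prod>l\<in>?I. if x l then p else 1 - p))"
    using p01 by (simp add: sum_ennreal[symmetric] Gx_nonneg prod_nonneg ennreal_mult prod_ennreal)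
  finally show ?thesis .
qed



lemma sqrt3_bound: "sqrt 3 / 2 \<le> exp (- 1/8 :: real)"
proof -
  have "exp (1/4 :: real) \<le> 1 + 1/4 + (1/4)\<^sup>2" by (rule exp_bound) simp_all
  also have "\<dots> \<le> 4/3" by (simp add: power2_eq_square)
  finally have e: "exp (1/4 :: real) \<le> 4/3" .
  have "exp (- 1/4 :: real) = inverse (exp (1/4))" by (simp add: exp_minus)
  also have "\<dots> \<ge> 3/4" using e by (simp add: field_simps)
  finally have e2: "3/4 \<le> exp (- 1/4 :: real)" .
  have "(exp (- 1/8 :: real))\<^sup>2 = exp (- 1/4)" using exp_double[of "- 1/8 :: real"] by simp
  moreover have "(sqrt 3 / 2)\<^sup>2 = (3/4 :: real)" by (simp add: power_divide)
  ultimately have "(sqrt 3 / 2)\<^sup>2 \<le> (exp (- 1/8 :: real))\<^sup>2" using e2 by simp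
  then show ?thesis by (rule power2_le_imp_le) simp
qed

lemma final_num:
  fixes delta :: real
  assumes d0: "0 < delta" and d1: "delta < 1"
  shows "(sqrt 3 / 2) ^ nat \<lceil>8 * ln (1 / delta)\<rceil> \<le> delta"
proof -
  let ?N = "nat \<lceil>8 * ln (1 / delta)\<rceil>"
  have N: "8 * ln (1 / delta) \<le> real ?N" by (rule real_nat_ceiling_ge)
  have "(sqrt 3 / 2) ^ ?N \<le> exp (- 1/8 :: real) ^ ?N"
    by (intro power_mono sqrt3_bound) simp
  also have "\<dots> = exp (real ?N * (- 1/8))" by (rule exp_of_nat_mult[symmetric])
  also have "\<dots> \<le> exp (- ln (1 / delta))" using N by simp
  also have "\<dots> = delta" using d0 by (simp add: ln_div)
  finally show ?thesis .
qed

lemma purity_le1: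
  assumes a: "\<alpha> \<subseteq> qubits n" and pure: "is_pure_state n psi"
  shows "purity n psi \<alpha> \<le> 1"
proof (cases "\<alpha> = {}")
  case True then show ?thesis by (simp add: purity_def)
next
  case False
  let ?R = "qubits n - \<alpha>"
  let ?r = "reduced_state n psi \<alpha>"
  define d where "d a = (\<Sum>c\<in>Pow ?R. (cmod (psi (a \<union> c)))\<^sup>2)" for a
  have conj: "?r b a = cnj (?r a b)" for a b
    unfolding reduced_state_def cnj_sum by (rule sum.cong[OF refl]) (simp add: mult.commute)
  have tr: "?r a b * ?r b a = complex_of_real ((cmod (?r a b))\<^sup>2)" for a b
  proof -
    have e: "?r b a = cnj (?r a b)" by (rule conj)
    show ?thesis unfolding e complex_norm_square ..
  qed
  have bd: "(cmod (?r a b))\<^sup>2 \<le> d a * d b" for a b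
  proof -
    have "cmod (?r a b) \<le> (\<Sum>c\<in>Pow ?R. cmod (psi (a \<union> c)) * cmod (psi (b \<union> c)))"
      unfolding reduced_state_def by (rule order_trans[OF norm_sum]) (simp add: norm_mult)
    then have "(cmod (?r a b))\<^sup>2 \<le> (\<Sum>c\<in>Pow ?R. cmod (psi (a \<union> c)) * cmod (psi (b \<union> c)))\<^sup>2"
      by (intro power_mono) simp_all
    also have "\<dots> \<le> d a * d b" unfolding d_def by (rule Cauchy_Schwarz_ineq_sum)
    finally show ?thesis .
  qed
  have sd: "(\<Sum>a\<in>Pow \<alpha>. d a) = 1"
  proof -
    have "(\<Sum>a\<in>Pow \<alpha>. d a) = (\<Sum>x\<in>Pow (\<alpha> \<union> ?R). (cmod (psi x))\<^sup>2)"
      unfolding d_def by (rule pow_split[symmetric]) auto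
    also have "\<alpha> \<union> ?R = qubits n" using a by auto
    finally show ?thesis using pure unfolding is_pure_state_def by simp
  qed
  have "purity n psi \<alpha> = (\<Sum>a\<in>Pow \<alpha>. \<Sum>b\<in>Pow \<alpha>. (cmod (?r a b))\<^sup>2)"
    using False unfolding purity_def by (simp add: tr Re_sum)
  also have "\<dots> \<le> (\<Sum>a\<in>Pow \<alpha>. \<Sum>b\<in>Pow \<alpha>. d a * d b)"
    by (intro sum_mono bd)
  also have "\<dots> = (\<Sum>a\<in>Pow \<alpha>. d a) * (\<Sum>b\<in>Pow \<alpha>. d b)" by (simp add: sum_product)
  also have "\<dots> = 1" using sd by simp
  finally show ?thesis .
qed

theorem theorem2:
  fixes n :: nat and psi :: "nat set \<Rightarrow> complex" and S :: "nat set"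
    and eps delta :: real and H :: "mat2 measure"
  assumes "is_pure_state n psi"
    and "S \<subseteq> qubits n" and "S \<noteq> {}"
    and "eps > 0"
    and "0 < delta" and "delta < 1"
    and "haar_U2 H"
  shows "failure_prob H n psi S eps
           (nat \<lceil>8 * ln (1 / delta)\<rceil>)
           (nat \<lceil>4 * (3/2) ^ card S / eps\<^sup>2\<rceil>)
         \<le> ennreal delta"
proof -
  note pure = assms(1) and S = assms(2) and Sne = assms(3) and eps = assms(4)
    and d0 = assms(5) and d1 = assms(6) and haar = assms(7)
  define NB where "NB = nat \<lceil>8 * ln (1 / delta)\<rceil>"
  define B where "B = nat \<lceil>4 * (3/2) ^ card S / eps\<^sup>2\<rceil>"
  define s where "s = card S"
  define p where "p = (1/3) ^ card S * (\<Sum>\<alpha>\<in>Pow S. purity n psi \<alpha>)"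
  define C where "C = conc_ent n psi S"
  have fS: "finite S" using S by (rule finite_subset) simp
  have p01: "0 \<le> p" "p \<le> 1" using block_vals(3,4)[OF haar S pure] unfolding p_def by auto
  have eq: "failure_prob H n psi S eps NB B = ennreal (\<Sum>x\<in>(\<Pi>\<^sub>E l\<in>{1..NB*B}. (UNIV :: bool set)).
      Gx s B NB C eps x * Wt p {1..NB*B} x)"
    unfolding failure_prob_eq[OF haar S pure] Wt_def qw_def p_def s_def C_def ..
  have hB: "4 * (3/2) ^ s / eps\<^sup>2 \<le> real B" unfolding B_def s_def by (rule real_nat_ceiling_ge)
  have B0: "B > 0"
  proof -
    have "0 < 4 * (3/2) ^ s / eps\<^sup>2" using eps by simp
    then show ?thesis using hB by linarith
  qed
  have "0 < 8 * ln (1 / delta)" using d0 d1 by simp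
  then have NB: "NB \<ge> 1" unfolding NB_def by linarith
  have SP: "(\<Sum>\<alpha>\<in>Pow S. purity n psi \<alpha>) \<le> 2 ^ s"
  proof -
    have "(\<Sum>\<alpha>\<in>Pow S. purity n psi \<alpha>) \<le> (\<Sum>\<alpha>\<in>Pow S. 1)"
      using S by (intro sum_mono purity_le1[OF _ pure]) auto
    also have "\<dots> = 2 ^ s" unfolding s_def by (simp add: card_Pow fS)
    finally show ?thesis .
  qed
  have hC: "(3/2) ^ s * p = 1 - C"
    unfolding p_def C_def conc_ent_def s_def by (simp add: power_divide field_simps)
  have hp: "((3/2) ^ s)\<^sup>2 * p \<le> (3/2) ^ s"
  proof -
    have "(3/2) ^ s * p = (\<Sum>\<alpha>\<in>Pow S. purity n psi \<alpha>) / 2 ^ s"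
      unfolding p_def s_def by (simp add: power_divide field_simps)
    also have "\<dots> \<le> 1" using SP by simp
    finally have "(3/2) ^ s * p \<le> 1" .
    then have "(3/2) ^ s * ((3/2) ^ s * p) \<le> (3/2) ^ s * 1" by (intro mult_left_mono) simp_all
    then show ?thesis by (simp add: power2_eq_square mult.assoc)
  qed
  have "(\<Sum>x\<in>(\<Pi>\<^sub>E l\<in>{1..NB*B}. (UNIV :: bool set)). Gx s B NB C eps x * Wt p {1..NB*B} x) \<le> (sqrt 3 / 2) ^ NB"
    by (rule disc_main[OF p01 eps B0 NB hC hp hB])
  also have "\<dots> \<le> delta" unfolding NB_def by (rule final_num[OF d0 d1])
  finally have "(\<Sum>x\<in>(\<Pi>\<^sub>E l\<in>{1..NB*B}. (UNIV :: bool set)). Gx s B NB C eps x * Wt p {1..NB*B} x) \<le> delta" .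
  then show ?thesis using eq unfolding NB_def B_def by (simp add: ennreal_leI)
qed



end
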